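(* Let $\lambda>0$. For a Yule tree with rate $\lambda$ grown for time $t\ge 0$ from an initial bifurcation (the number of leaves being random), let $I(t)$ and $P(t)$ be the expected sums of the interior and pendant edge lengths respectively. Then $$I(t)=\frac{1}{\lambda}\bigl(e^{\lambda t}+e^{-\lambda t}-2\bigr),\qquad P(t)=\frac{1}{\lambda}\bigl(e^{\lambda t}-e^{-\lambda t}\bigr).$$ Consequently, defining $p(t)=P(t)/(2e^{\lambda t})$ and $i(t)=I(t)/(2e^{\lambda t}-2)$ for $t>0$ (the average pendant and interior edge lengths when the number of leaves takes its expected value $2e^{\lambda t}$), the ratio $p(t)/i(t)$ converges to $1$ exponentially fast as $t\to\infty$: there exist constants $C,c>0$ with $|p(t)/i(t)-1|\le Ce^{-ct}$ for all $t>0$. *)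

theory Defs
  imports "HOL-Probability.Probability"
begin

text \<open>The process is generated by its jump chain:
  in a state with k lineages the waiting time to the next split is Exp(k*lam), and the
  splitting lineage is chosen uniformly among the k lineages.  The randomness is an i.i.d.
  sequence of pairs (E_n, U_n) with E_n ~ Exp(1) and U_n ~ Uniform[0,1]; the waiting time is
  E_n/(k*lam) and the chosen lineage has index floor(U_n * k).

  A state is (current time T, list of birth times of alive lineages, accumulated
  interior edge length).\<close>

type_synonym yule_state = "real \<times> real list \<times> real"

definition yule_step :: "real \<Rightarrow> real \<times> real \<Rightarrow> yule_state \<Rightarrow> yule_state" where
  "yule_step lam eu s =
     (case s of (T, bs, acc) \<Rightarrow>
       let k = length bs;
           w = fst eu / (lam * real k);
           i = min (k - 1) (nat \<lfloor>snd eu * real k\<rfloor>);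
           T' = T + w;
           b = bs ! i
       in (T', take i bs @ drop (Suc i) bs @ [T', T'], acc + (T' - b)))"

primrec yule_chain :: "real \<Rightarrow> (nat \<Rightarrow> real \<times> real) \<Rightarrow> nat \<Rightarrow> yule_state" where
  "yule_chain lam \<omega> 0 = (0, [0, 0], 0)"
| "yule_chain lam \<omega> (Suc n) = yule_step lam (\<omega> n) (yule_chain lam \<omega> n)"

text \<open>The state of the tree at time t: the state after the last split not later than t.
  (If the jump times never exceed t -- an event of probability zero -- we put 0.)\<close>

definition yule_at :: "real \<Rightarrow> (nat \<Rightarrow> real \<times> real) \<Rightarrow> real \<Rightarrow> yule_state" where
  "yule_at lam \<omega> t = yule_chain lam \<omega> (LEAST n. t < fst (yule_chain lam \<omega> (Suc n)))"

definition yule_defined :: "real \<Rightarrow> (nat \<Rightarrow> real \<times> real) \<Rightarrow> real \<Rightarrow> bool" where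
  "yule_defined lam \<omega> t \<longleftrightarrow> (\<exists>n. t < fst (yule_chain lam \<omega> (Suc n)))"

text \<open>Sum of pendant edge lengths at time t: each alive lineage is a pendant edge from its
  birth time up to t.\<close>

definition pendant_sum :: "real \<Rightarrow> (nat \<Rightarrow> real \<times> real) \<Rightarrow> real \<Rightarrow> real" where
  "pendant_sum lam \<omega> t =
     (if yule_defined lam \<omega> t
      then sum_list (map (\<lambda>b. t - b) (fst (snd (yule_at lam \<omega> t)))) else 0)"

definition interior_sum :: "real \<Rightarrow> (nat \<Rightarrow> real \<times> real) \<Rightarrow> real \<Rightarrow> real" where
  "interior_sum lam \<omega> t =
     (if yule_defined lam \<omega> t then snd (snd (yule_at lam \<omega> t)) else 0)"

definition yule_base :: "(real \<times> real) measure" where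
  "yule_base = density lborel (exponential_density 1) \<Otimes>\<^sub>M uniform_measure lborel {0..1}"

definition yule_space :: "(nat \<Rightarrow> real \<times> real) measure" where
  "yule_space = PiM UNIV (\<lambda>_::nat. yule_base)"

definition yule_I :: "real \<Rightarrow> real \<Rightarrow> real" where
  "yule_I lam t = (\<integral>\<omega>. interior_sum lam \<omega> t \<partial>yule_space)"

definition yule_P :: "real \<Rightarrow> real \<Rightarrow> real" where
  "yule_P lam t = (\<integral>\<omega>. pendant_sum lam \<omega> t \<partial>yule_space)"

definition yule_p :: "real \<Rightarrow> real \<Rightarrow> real" where
  "yule_p lam t = yule_P lam t / (2 * exp (lam * t))"

definition yule_i :: "real \<Rightarrow> real \<Rightarrow> real" where
  "yule_i lam t = yule_I lam t / (2 * exp (lam * t) - 2)"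

end

theory Submission
  imports Defs "HOL-Real_Asymp.Real_Asymp"
begin


primrec gchain :: "(real \<times> real \<Rightarrow> real \<times> real) \<Rightarrow> real \<Rightarrow> yule_state \<Rightarrow> (nat \<Rightarrow> real \<times> real) \<Rightarrow> nat \<Rightarrow> yule_state" where
  "gchain g lam s \<omega> 0 = s"
| "gchain g lam s \<omega> (Suc n) = yule_step lam (g (\<omega> n)) (gchain g lam s \<omega> n)"

lemma gchain_case_nat:
  "gchain g lam s (case_nat x \<omega>) (Suc n) = gchain g lam (yule_step lam (g x) s) \<omega> n"
  by (induction n) auto

lemma yule_chain_gchain: "yule_chain lam \<omega> n = gchain id lam (0, [0, 0], 0) \<omega> n"
  by (induction n) auto

definition nth_new :: "real list \<Rightarrow> nat \<Rightarrow> real \<Rightarrow> nat \<Rightarrow> real" where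
  "nth_new bs m T' j = (if j < m then bs ! j else if j < length bs - 1 then bs ! Suc j else T')"

lemma nth_new_eq:
  assumes "m < length bs" "j < Suc (length bs)"
  shows "(take m bs @ drop (Suc m) bs @ [T', T']) ! j = nth_new bs m T' j"
proof (cases "j < m")
  case True
  then show ?thesis using assms by (simp add: nth_new_def nth_append min_def)
next
  case False
  note F = this
  show ?thesis
  proof (cases "j < length bs - 1")
    case True
    moreover have "j - m < length bs - Suc m" using True F assms by linarith
    ultimately show ?thesis using assms F by (simp add: nth_new_def nth_append min_def)
  next
    case False
    then have "j - m - (length bs - Suc m) = 0 \<or> j - m - (length bs - Suc m) = 1" using assms F by linarith
    then show ?thesis using assms F False by (auto simp add: nth_new_def nth_append min_def)
  qed
qed

lemma length_yule_step:
  "length (fst (snd (yule_step lam x s))) = Suc (length (fst (snd s)))" if ne: "fst (snd s) \<noteq> []"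
proof -
  obtain T bs acc where s: "s = (T, bs, acc)" by (cases s)
  have "bs \<noteq> []" using ne s by simp
  then have lt: "min (length bs - 1) (nat \<lfloor>snd x * real (length bs)\<rfloor>) < length bs" by (simp add: min_less_iff_disj)
  have len: "\<And>i a b. i < length bs \<Longrightarrow> length (take i bs @ drop (Suc i) bs @ [a, b]) = Suc (length bs)"
    by simp
  show ?thesis unfolding s yule_step_def Let_def prod.case fst_conv snd_conv
    by (rule len[OF lt])
qed

lemma yule_step_eq:
  fixes lam :: real and x :: "real \<times> real" and s :: yule_state
  assumes "fst (snd s) \<noteq> []"
  defines "k \<equiv> length (fst (snd s))"
  defines "i \<equiv> min (k - 1) (nat \<lfloor>snd x * real k\<rfloor>)"
  defines "T' \<equiv> fst s + fst x / (lam * real k)"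
  shows "fst (yule_step lam x s) = T'"
    "snd (snd (yule_step lam x s)) = snd (snd s) + (T' - fst (snd s) ! i)"
    "\<And>j. j < Suc k \<Longrightarrow> fst (snd (yule_step lam x s)) ! j = nth_new (fst (snd s)) i T' j"
proof -
  obtain T bs acc where s: "s = (T, bs, acc)" by (cases s)
  have ys: "yule_step lam x s = (T', take i bs @ drop (Suc i) bs @ [T', T'], acc + (T' - bs ! i))"
    unfolding s yule_step_def Let_def prod.case i_def T'_def k_def fst_conv snd_conv ..
  have "bs \<noteq> []" using assms(1) s by simp
  then have lt: "i < k" unfolding i_def k_def s by (simp add: min_less_iff_disj)
  show "fst (yule_step lam x s) = T'" unfolding ys by simp
  show "snd (snd (yule_step lam x s)) = snd (snd s) + (T' - fst (snd s) ! i)" unfolding ys by (simp add: s)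
  show "fst (snd (yule_step lam x s)) ! j = nth_new (fst (snd s)) i T' j" if "j < Suc k" for j
    unfolding ys using lt that by (simp add: k_def s nth_new_eq)
qed

lemma meas_step:
  fixes M :: "'a measure" and sf :: "'a \<Rightarrow> yule_state" and x :: "'a \<Rightarrow> real \<times> real"
  assumes L: "L > 0" "\<And>\<omega>. length (fst (snd (sf \<omega>))) = L"
  assumes [measurable]: "(\<lambda>\<omega>. fst (sf \<omega>)) \<in> borel_measurable M"
    "(\<lambda>\<omega>. snd (snd (sf \<omega>))) \<in> borel_measurable M"
    "\<And>j. j < L \<Longrightarrow> (\<lambda>\<omega>. fst (snd (sf \<omega>)) ! j) \<in> borel_measurable M"
    "(\<lambda>\<omega>. fst (x \<omega>)) \<in> borel_measurable M"
    "(\<lambda>\<omega>. snd (x \<omega>)) \<in> borel_measurable M"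
  shows "(\<lambda>\<omega>. fst (yule_step lam (x \<omega>) (sf \<omega>))) \<in> borel_measurable M"
    "(\<lambda>\<omega>. snd (snd (yule_step lam (x \<omega>) (sf \<omega>)))) \<in> borel_measurable M"
    "\<And>j. j < Suc L \<Longrightarrow> (\<lambda>\<omega>. fst (snd (yule_step lam (x \<omega>) (sf \<omega>))) ! j) \<in> borel_measurable M"
    "\<And>\<omega>. length (fst (snd (yule_step lam (x \<omega>) (sf \<omega>)))) = Suc L"
proof -
  have ne: "\<And>\<omega>. fst (snd (sf \<omega>)) \<noteq> []" using L by (metis length_greater_0_conv)
  define i where "i \<omega> = min (L - 1) (nat \<lfloor>snd (x \<omega>) * real L\<rfloor>)" for \<omega>
  have im[measurable]: "i \<in> measurable M (count_space UNIV)"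
    unfolding i_def by measurable
  have [measurable]: "(\<lambda>\<omega>. fst (sf \<omega>) + fst (x \<omega>) / (lam * real L)) \<in> borel_measurable M"
    by measurable
  have bi: "(\<lambda>\<omega>. fst (snd (sf \<omega>)) ! min (i \<omega>) (L - 1)) \<in> borel_measurable M"
    by (rule measurable_compose_countable'[where g=i and I=UNIV, OF _ im])
       (use L in \<open>auto intro!: assms(5)\<close>)
  have ii: "min (i \<omega>) (L - 1) = i \<omega>" for \<omega> unfolding i_def by simp
  show "(\<lambda>\<omega>. fst (yule_step lam (x \<omega>) (sf \<omega>))) \<in> borel_measurable M"
    by (subst yule_step_eq(1)[OF ne]) (simp add: L)
  show "(\<lambda>\<omega>. snd (snd (yule_step lam (x \<omega>) (sf \<omega>)))) \<in> borel_measurable M"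
  proof -
    have "(\<lambda>\<omega>. snd (snd (yule_step lam (x \<omega>) (sf \<omega>)))) = (\<lambda>\<omega>. snd (snd (sf \<omega>)) +
          (fst (sf \<omega>) + fst (x \<omega>) / (lam * real L) - fst (snd (sf \<omega>)) ! min (i \<omega>) (L - 1)))"
      by (rule ext, subst yule_step_eq(2)[OF ne]) (simp add: L i_def)
    then show ?thesis using bi by simp
  qed
  show "length (fst (snd (yule_step lam (x \<omega>) (sf \<omega>)))) = Suc L" for \<omega>
    using length_yule_step[OF ne] L by simp
  fix j assume j: "j < Suc L"
  have "(\<lambda>\<omega>. nth_new (fst (snd (sf \<omega>))) (min (i \<omega>) (L - 1)) (fst (sf \<omega>) + fst (x \<omega>) / (lam * real L)) j)
      \<in> borel_measurable M"
  proof (rule measurable_compose_countable'[where g=i and I=UNIV, OF _ im], goal_cases)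
    case (1 m)
    have e: "(\<lambda>\<omega>. nth_new (fst (snd (sf \<omega>))) (min m (L - 1)) (fst (sf \<omega>) + fst (x \<omega>) / (lam * real L)) j)
      = (if j < min m (L-1) then (\<lambda>\<omega>. fst (snd (sf \<omega>)) ! j) else if j < L - 1 then (\<lambda>\<omega>. fst (snd (sf \<omega>)) ! Suc j)
         else (\<lambda>\<omega>. fst (sf \<omega>) + fst (x \<omega>) / (lam * real L)))"
      by (auto simp: nth_new_def L)
    show ?case unfolding e using j
      by (auto intro!: assms(5))
  qed auto
  moreover have "(\<lambda>\<omega>. fst (snd (yule_step lam (x \<omega>) (sf \<omega>))) ! j) = (\<lambda>\<omega>. nth_new (fst (snd (sf \<omega>))) (min (i \<omega>) (L - 1)) (fst (sf \<omega>) + fst (x \<omega>) / (lam * real L)) j)"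
    using j by (intro ext, subst yule_step_eq(3)[OF ne]) (simp_all add: L i_def)
  ultimately show "(\<lambda>\<omega>. fst (snd (yule_step lam (x \<omega>) (sf \<omega>))) ! j) \<in> borel_measurable M"
    by (simp only:)
qed



definition g0 :: "real \<times> real \<Rightarrow> real \<times> real" where "g0 x = (max 0 (fst x), snd x)"

lemma meas_gchain:
  fixes M :: "'a measure" and sf :: "'a \<Rightarrow> (nat \<Rightarrow> real \<times> real)"
  assumes ne: "fst (snd s) \<noteq> []"
    and [measurable]: "\<And>n. (\<lambda>\<omega>. fst (g (sf \<omega> n))) \<in> borel_measurable M"
      "\<And>n. (\<lambda>\<omega>. snd (g (sf \<omega> n))) \<in> borel_measurable M"
  shows "(\<lambda>\<omega>. fst (gchain g lam s (sf \<omega>) n)) \<in> borel_measurable M \<and>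
         (\<lambda>\<omega>. snd (snd (gchain g lam s (sf \<omega>) n))) \<in> borel_measurable M \<and>
         (\<forall>j < length (fst (snd s)) + n. (\<lambda>\<omega>. fst (snd (gchain g lam s (sf \<omega>) n)) ! j) \<in> borel_measurable M) \<and>
         (\<forall>\<omega>. length (fst (snd (gchain g lam s (sf \<omega>) n))) = length (fst (snd s)) + n)"
proof (induction n)
  case 0
  then show ?case by simp
next
  case (Suc n)
  let ?L = "length (fst (snd s)) + n"
  have L: "?L > 0" using ne by simp
  note IH = Suc.IH[THEN conjunct1] Suc.IH[THEN conjunct2, THEN conjunct1]
    Suc.IH[THEN conjunct2, THEN conjunct2, THEN conjunct1, rule_format]
    Suc.IH[THEN conjunct2, THEN conjunct2, THEN conjunct2, rule_format]
  note ms = meas_step[where sf="\<lambda>\<omega>. gchain g lam s (sf \<omega>) n" and x="\<lambda>\<omega>. g (sf \<omega> n)" and M=M and lam=lam,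
      OF L IH(4) IH(1) IH(2) IH(3) assms(2) assms(3)]
  show ?case unfolding gchain.simps add_Suc_right
    using ms(1,2,4) ms(3) by blast
qed

definition Am :: "yule_state \<Rightarrow> real" where
  "Am s = sum_list (map (\<lambda>b. fst s - b) (fst (snd s)))"

lemma meas_Am:
  fixes M :: "'a measure" and sf :: "'a \<Rightarrow> yule_state"
  assumes "\<And>\<omega>. length (fst (snd (sf \<omega>))) = L"
    and [measurable]: "(\<lambda>\<omega>. fst (sf \<omega>)) \<in> borel_measurable M"
      "\<And>j. j < L \<Longrightarrow> (\<lambda>\<omega>. fst (snd (sf \<omega>)) ! j) \<in> borel_measurable M"
  shows "(\<lambda>\<omega>. Am (sf \<omega>)) \<in> borel_measurable M"
proof -
  have "(\<lambda>\<omega>. Am (sf \<omega>)) = (\<lambda>\<omega>. \<Sum>j<L. fst (sf \<omega>) - fst (snd (sf \<omega>)) ! j)"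
    by (rule ext) (simp add: Am_def sum_list_sum_nth assms(1) atLeast0LessThan)
  then show ?thesis by simp
qed

lemma prob_space_yule_base: "prob_space yule_base"
  unfolding yule_base_def
  by (intro prob_space_pair prob_space_exponential_density prob_space_uniform_measure) auto

interpretation YB: sequence_space yule_base
  by (simp add: sequence_space_def product_prob_space_def product_prob_space_axioms_def product_sigma_finite_def prob_space_yule_base prob_space_imp_sigma_finite)

lemma yule_space_S: "yule_space = YB.S"
  by (simp add: yule_space_def)

lemma sets_yule_base[measurable_cong]: "sets yule_base = sets (borel \<Otimes>\<^sub>M borel)"
  unfolding yule_base_def by (intro sets_pair_measure_cong) auto

lemma nn_integral_yule_space_iter:
  assumes f[measurable]: "f \<in> borel_measurable yule_space"
  shows "(\<integral>\<^sup>+\<omega>. f \<omega> \<partial>yule_space) = (\<integral>\<^sup>+x. (\<integral>\<^sup>+\<omega>. f (case_nat x \<omega>) \<partial>yule_space) \<partial>yule_base)"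
proof -
  interpret P: pair_sigma_finite yule_base YB.S ..
  have f'[measurable]: "f \<in> borel_measurable YB.S" using f by (simp add: yule_space_def)
  have m: "(\<lambda>X. f (case_nat (fst X) (snd X))) \<in> borel_measurable (yule_base \<Otimes>\<^sub>M YB.S)"
    by measurable
  have "(\<integral>\<^sup>+\<omega>. f \<omega> \<partial>yule_space) = (\<integral>\<^sup>+X. f ((\<lambda>(s, \<omega>). case_nat s \<omega>) X) \<partial>(yule_base \<Otimes>\<^sub>M YB.S))"
    unfolding yule_space_S by (subst YB.PiM_iter[symmetric]) (simp add: nn_integral_distr yule_space_def)
  also have "\<dots> = (\<integral>\<^sup>+X. f (case_nat (fst X) (snd X)) \<partial>(yule_base \<Otimes>\<^sub>M YB.S))"
    by (simp add: split_beta')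
  also have "\<dots> = (\<integral>\<^sup>+x. \<integral>\<^sup>+X. f (case_nat x X) \<partial>YB.S \<partial>yule_base)"
    using YB.P.nn_integral_fst[OF m] by simp
  finally show ?thesis by (simp add: yule_space_def)
qed

lemma meas_coords:
  "(\<lambda>\<omega>. fst (g0 (\<omega> n))) \<in> borel_measurable yule_space"
  "(\<lambda>\<omega>. snd (g0 (\<omega> n))) \<in> borel_measurable yule_space"
  "(\<lambda>\<omega>. fst (id (\<omega> n))) \<in> borel_measurable yule_space"
  "(\<lambda>\<omega>. snd (id (\<omega> n))) \<in> borel_measurable yule_space"
  unfolding g0_def yule_space_def id_def by measurable



definition wfs :: "yule_state \<Rightarrow> bool" where
  "wfs s \<longleftrightarrow> fst (snd s) \<noteq> [] \<and> 0 \<le> fst s \<and> (\<forall>b\<in>set (fst (snd s)). 0 \<le> b \<and> b \<le> fst s)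
     \<and> 0 \<le> snd (snd s) \<and> snd (snd s) \<le> real (length (fst (snd s))) * fst s"

lemma wfs_init: "wfs (0, [0, 0], 0)" by (simp add: wfs_def)

lemma step_g0:
  fixes s :: yule_state and lam :: real and x :: "real \<times> real"
  assumes "wfs s" "lam > 0"
  defines "k \<equiv> length (fst (snd s))"
  defines "i \<equiv> min (k - 1) (nat \<lfloor>snd x * real k\<rfloor>)"
  defines "T' \<equiv> fst s + max 0 (fst x) / (lam * real k)"
  shows "yule_step lam (g0 x) s = (T', take i (fst (snd s)) @ drop (Suc i) (fst (snd s)) @ [T', T'],
            snd (snd s) + (T' - fst (snd s) ! i))"
    "i < k" "fst s \<le> T'"
proof -
  obtain T bs acc where s: "s = (T, bs, acc)" by (cases s)
  show "yule_step lam (g0 x) s = (T', take i (fst (snd s)) @ drop (Suc i) (fst (snd s)) @ [T', T'],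
            snd (snd s) + (T' - fst (snd s) ! i))"
    unfolding s yule_step_def Let_def prod.case i_def T'_def k_def fst_conv snd_conv g0_def ..
  have "fst (snd s) \<noteq> []" using assms(1) by (simp add: wfs_def)
  then show "i < k" unfolding i_def k_def by (simp add: min_less_iff_disj)
  show "fst s \<le> T'" unfolding T'_def using assms(2) by (simp add: k_def)
qed

lemma wfs_step:
  assumes "wfs s" "lam > 0"
  shows "wfs (yule_step lam (g0 x) s)"
proof -
  define k where "k = length (fst (snd s))"
  define i where "i = min (k - 1) (nat \<lfloor>snd x * real k\<rfloor>)"
  define T' where "T' = fst s + max 0 (fst x) / (lam * real k)"
  note st0 = step_g0[OF assms, of x]
  have st1: "yule_step lam (g0 x) s = (T', take i (fst (snd s)) @ drop (Suc i) (fst (snd s)) @ [T', T'],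
            snd (snd s) + (T' - fst (snd s) ! i))" using st0(1) by (simp add: i_def k_def T'_def)
  have ik: "i < k" using st0(2) by (simp add: i_def k_def)
  have bi: "fst (snd s) ! i \<in> set (fst (snd s))" using ik by (simp add: k_def)
  have W: "fst (snd s) \<noteq> []" "0 \<le> fst s" "\<And>b. b\<in>set (fst (snd s)) \<Longrightarrow> 0 \<le> b \<and> b \<le> fst s"
     "0 \<le> snd (snd s)" "snd (snd s) \<le> real k * fst s"
    using assms(1) by (auto simp: wfs_def k_def)
  have T': "fst s \<le> T'" using st0(3) by (simp add: T'_def k_def)
  have sub: "set (take i (fst (snd s)) @ drop (Suc i) (fst (snd s)) @ [T', T']) \<subseteq> set (fst (snd s)) \<union> {T'}"
    using set_take_subset set_drop_subset by fastforce
  have len: "length (take i (fst (snd s)) @ drop (Suc i) (fst (snd s)) @ [T', T']) = Suc k"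
    using ik by (simp add: k_def)
  have b0: "0 \<le> fst (snd s) ! i" "fst (snd s) ! i \<le> fst s" using W(3)[OF bi] by auto
  have acc_le: "snd (snd s) + (T' - fst (snd s) ! i) \<le> real (Suc k) * T'"
  proof -
    have "real k * fst s \<le> real k * T'" using T' by (simp add: mult_left_mono)
    then show ?thesis using W(5) b0 by (simp add: algebra_simps)
  qed
  have nb: "0 \<le> b \<and> b \<le> T'" if "b \<in> set (take i (fst (snd s)) @ drop (Suc i) (fst (snd s)) @ [T', T'])" for b
  proof -
    have "b \<in> set (fst (snd s)) \<or> b = T'" using sub that by blast
    then show ?thesis using W(2,3) T' by force
  qed
  show ?thesis unfolding st1 wfs_def fst_conv snd_conv len
    using W T' nb b0 acc_le by auto
qed

lemma T_step: "wfs s \<Longrightarrow> lam > 0 \<Longrightarrow> fst s \<le> fst (yule_step lam (g0 x) s)"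
  using step_g0(1,3) by simp

lemma wfs_gchain: "wfs s \<Longrightarrow> lam > 0 \<Longrightarrow> wfs (gchain g0 lam s \<omega> n)"
  by (induction n) (auto intro: wfs_step)

lemma T_gchain_mono: "wfs s \<Longrightarrow> lam > 0 \<Longrightarrow> m \<le> n \<Longrightarrow> fst (gchain g0 lam s \<omega> m) \<le> fst (gchain g0 lam s \<omega> n)"
proof (induction n)
  case 0 then show ?case by simp
next
  case (Suc n)
  show ?case
  proof (cases "m = Suc n")
    case False
    then have "fst (gchain g0 lam s \<omega> m) \<le> fst (gchain g0 lam s \<omega> n)" using Suc by simp
    also have "\<dots> \<le> fst (gchain g0 lam s \<omega> (Suc n))"
      by (simp, rule T_step[OF wfs_gchain[OF Suc.prems(1,2)] Suc.prems(2)])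
    finally show ?thesis .
  qed simp
qed

lemma len_gchain: "wfs s \<Longrightarrow> lam > 0 \<Longrightarrow> length (fst (snd (gchain g0 lam s \<omega> n))) = length (fst (snd s)) + n"
proof (induction n)
  case (Suc n)
  then show ?case using length_yule_step[of "gchain g0 lam s \<omega> n" lam] wfs_gchain[OF Suc.prems]
    by (simp add: wfs_def)
qed simp

lemma Am_nonneg: "wfs s \<Longrightarrow> 0 \<le> Am s"
  unfolding Am_def wfs_def by (auto intro!: sum_list_nonneg)

lemma Am_le: "wfs s \<Longrightarrow> Am s \<le> real (length (fst (snd s))) * fst s"
proof -
  assume "wfs s"
  then have "\<forall>b\<in>set (fst (snd s)). fst s - b \<le> fst s" by (auto simp: wfs_def)
  then have "Am s \<le> sum_list (map (\<lambda>b. fst s) (fst (snd s)))"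
    unfolding Am_def by (intro sum_list_mono) auto
  also have "\<dots> = real (length (fst (snd s))) * fst s" by (simp add: sum_list_triv)
  finally show ?thesis .
qed



lemma idx_indicator:
  fixes u :: real
  assumes k: "k > 0" and u: "0 \<le> u" "u < 1" and i: "i < k"
  shows "indicator {real i / real k ..< real (Suc i) / real k} u = (if i = nat \<lfloor>u * real k\<rfloor> then 1 else (0::ennreal))"
proof -
  have kk: "real k > 0" using k by simp
  have "u \<in> {real i / real k ..< real (Suc i) / real k} \<longleftrightarrow> real i \<le> u * real k \<and> u * real k < real i + 1"
    using kk by (simp add: field_simps)
  also have "\<dots> \<longleftrightarrow> \<lfloor>u * real k\<rfloor> = int i" by (simp add: floor_eq_iff)
  also have "\<dots> \<longleftrightarrow> i = nat \<lfloor>u * real k\<rfloor>" using u by auto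
  finally show ?thesis by (simp add: indicator_def)
qed

lemma idx_lt: "k > 0 \<Longrightarrow> 0 \<le> u \<Longrightarrow> u < 1 \<Longrightarrow> nat \<lfloor>u * real k\<rfloor> < k"
proof -
  assume k: "k > 0" and u: "0 \<le> u" "u < 1"
  have "u * real k < real k" using k u by simp
  then have "\<lfloor>u * real k\<rfloor> < int k" by (simp add: floor_less_iff)
  moreover have "0 \<le> \<lfloor>u * real k\<rfloor>" using u by simp
  ultimately show ?thesis by (simp add: nat_less_iff)
qed

lemma uniform_idx:
  fixes F :: "nat \<Rightarrow> ennreal"
  assumes k: "k > 0"
  shows "(\<integral>\<^sup>+u. F (min (k - 1) (nat \<lfloor>u * real k\<rfloor>)) \<partial>uniform_measure lborel {0..1::real}) = (\<Sum>i<k. F i) / of_nat k"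
proof -
  have m[measurable]: "(\<lambda>u::real. F (min (k - 1) (nat \<lfloor>u * real k\<rfloor>))) \<in> borel_measurable borel"
    by measurable
  have "(\<integral>\<^sup>+u. F (min (k - 1) (nat \<lfloor>u * real k\<rfloor>)) \<partial>uniform_measure lborel {0..1::real})
      = (\<integral>\<^sup>+u. F (min (k - 1) (nat \<lfloor>u * real k\<rfloor>)) * indicator {0..1} u \<partial>lborel) / emeasure lborel {0..1::real}"
    by (rule nn_integral_uniform_measure) auto
  also have "\<dots> = (\<integral>\<^sup>+u. F (min (k - 1) (nat \<lfloor>u * real k\<rfloor>)) * indicator {0..1} u \<partial>lborel)"
    by (simp add: divide_ennreal_def)
  also have "\<dots> = (\<integral>\<^sup>+u. (\<Sum>i<k. F i * indicator {real i / real k ..< real (Suc i) / real k} u) \<partial>lborel)"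
  proof (rule nn_integral_cong_AE)
    show "AE u in lborel. F (min (k - 1) (nat \<lfloor>u * real k\<rfloor>)) * indicator {0..1} u =
        (\<Sum>i<k. F i * indicator {real i / real k ..< real (Suc i) / real k} u)"
      using AE_lborel_singleton[of "1::real"]
    proof eventually_elim
      case (elim u)
      show ?case
      proof (cases "0 \<le> u \<and> u < 1")
        case True
        then have lt: "nat \<lfloor>u * real k\<rfloor> < k" using idx_lt k by blast
        then have mn: "min (k - 1) (nat \<lfloor>u * real k\<rfloor>) = nat \<lfloor>u * real k\<rfloor>" by simp
        have "(\<Sum>i<k. F i * indicator {real i / real k ..< real (Suc i) / real k} u)
            = (\<Sum>i<k. if i = nat \<lfloor>u * real k\<rfloor> then F i else 0)"
        proof (rule sum.cong[OF refl])
          fix i assume "i \<in> {..<k}"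
          then have "indicator {real i / real k ..< real (Suc i) / real k} u = (if i = nat \<lfloor>u * real k\<rfloor> then 1 else (0::ennreal))"
            using idx_indicator[OF k] True by blast
          then show "F i * indicator {real i / real k ..< real (Suc i) / real k} u = (if i = nat \<lfloor>u * real k\<rfloor> then F i else 0)"
            by simp
        qed
        also have "\<dots> = F (nat \<lfloor>u * real k\<rfloor>)" using lt by (simp add: sum.delta')
        finally show ?thesis using True mn by simp
      next
        case False
        then have "u < 0 \<or> 1 < u" using elim by auto
        moreover have "\<And>i. i < k \<Longrightarrow> real (Suc i) / real k \<le> 1" using k by (simp add: field_simps)
        moreover have "\<And>i. 0 \<le> real i / real k" by simp
        ultimately have "\<And>i. i < k \<Longrightarrow> indicator {real i / real k ..< real (Suc i) / real k} u = (0::ennreal)"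
        proof -
          fix i assume "i < k"
          then have h1: "real (Suc i) / real k \<le> 1"
            using \<open>\<And>i. i < k \<Longrightarrow> real (Suc i) / real k \<le> 1\<close> by blast
          have h2: "0 \<le> real i / real k" by simp
          have "u \<notin> {real i / real k ..< real (Suc i) / real k}"
            unfolding atLeastLessThan_iff using \<open>u < 0 \<or> 1 < u\<close> h1 h2 by linarith
          then show "indicator {real i / real k ..< real (Suc i) / real k} u = (0::ennreal)" by simp
        qed
        then show ?thesis using False elim by (auto simp: indicator_def)
      qed
    qed
  qed
  also have "\<dots> = (\<Sum>i<k. F i * emeasure lborel {real i / real k ..< real (Suc i) / real k})"
    by (subst nn_integral_sum) (auto intro!: sum.cong nn_integral_cmult_indicator)
  also have "\<dots> = (\<Sum>i<k. F i * ennreal (1 / real k))"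
    using k by (intro sum.cong refl) (simp add: field_simps)
  also have "\<dots> = (\<Sum>i<k. F i) / of_nat k"
    using k by (simp add: sum_distrib_right[symmetric] divide_ennreal_def ennreal_of_nat_eq_real_of_nat inverse_ennreal inverse_eq_divide)
  finally show ?thesis .
qed

lemma exp_first_step:
  fixes F Hh :: "real \<Rightarrow> real"
  assumes U: "0 \<le> U"
    and D: "\<And>x. 0 \<le> x \<Longrightarrow> x \<le> U \<Longrightarrow> (F has_real_derivative exp (-x) * Hh x) (at x)"
    and Hnn: "\<And>x. 0 \<le> x \<Longrightarrow> x \<le> U \<Longrightarrow> 0 \<le> Hh x"
    and Hm[measurable]: "Hh \<in> borel_measurable borel"
    and X: "0 \<le> X" and FU: "F U = - exp (-U) * X" and F0: "F 0 = - V"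
  shows "(\<integral>\<^sup>+e. ennreal (if e \<le> U then Hh e else X) \<partial>density lborel (exponential_density 1)) = ennreal V"
proof -
  have mono: "F 0 \<le> F U"
    by (rule deriv_nonneg_imp_mono[OF D]) (use U Hnn in auto)
  have "(\<integral>\<^sup>+e. ennreal (if e \<le> U then Hh e else X) \<partial>density lborel (exponential_density 1))
      = (\<integral>\<^sup>+e. ennreal (exponential_density 1 e) * ennreal (if e \<le> U then Hh e else X) \<partial>lborel)"
    by (subst nn_integral_density) auto
  also have "\<dots> = (\<integral>\<^sup>+e. ennreal (exp (-e) * Hh e) * indicator {0..U} e + ennreal (exp (-e) * X) * indicator {U..} e \<partial>lborel)"
  proof (rule nn_integral_cong_AE)
    show "AE e in lborel. ennreal (exponential_density 1 e) * ennreal (if e \<le> U then Hh e else X) =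
       ennreal (exp (-e) * Hh e) * indicator {0..U} e + ennreal (exp (-e) * X) * indicator {U..} e"
      using AE_lborel_singleton[of U]
    proof eventually_elim
      case (elim e)
      show ?case
      proof (cases "e < 0")
        case True then show ?thesis using U by (simp add: exponential_density_def indicator_def)
      next
        case False
        then show ?thesis using elim U Hnn X
          by (auto simp: exponential_density_def indicator_def ennreal_mult')
      qed
    qed
  qed
  also have "\<dots> = (\<integral>\<^sup>+e. ennreal (exp (-e) * Hh e) * indicator {0..U} e \<partial>lborel) + (\<integral>\<^sup>+e. ennreal (exp (-e) * X) * indicator {U..} e \<partial>lborel)"
    by (rule nn_integral_add) auto
  also have "(\<integral>\<^sup>+e. ennreal (exp (-e) * Hh e) * indicator {0..U} e \<partial>lborel) = ennreal (F U - F 0)"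
    by (rule nn_integral_FTC_Icc) (use D Hnn U in auto)
  also have "(\<integral>\<^sup>+e. ennreal (exp (-e) * X) * indicator {U..} e \<partial>lborel) = ennreal (0 - (- exp (-U) * X))"
  proof (rule nn_integral_FTC_atLeast)
    show "((\<lambda>x. - exp (-x) * X) \<longlongrightarrow> 0) at_top" by real_asymp
  qed (auto intro!: derivative_eq_intros simp: X)
  also have "ennreal (F U - F 0) + ennreal (0 - (- exp (-U) * X)) = ennreal V"
    using mono X FU F0 by (subst ennreal_plus[symmetric]) auto
  finally show ?thesis .
qed



lemma Am_shift: "Am (T', bs, acc) = Am (T, bs, acc') + real (length bs) * (T' - T)"
  unfolding Am_def by (induction bs) (simp_all add: algebra_simps)

lemma sum_list_remove_nth:
  assumes lt: "i < length xs"
  shows "sum_list (map f xs) = sum_list (map f (take i xs)) + f (xs ! i) + sum_list (map f (drop (Suc i) xs))"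
proof -
  have "sum_list (map f xs) = sum_list (map f (take (Suc i) xs @ drop (Suc i) xs))" by simp
  also have "\<dots> = sum_list (map f (take i xs)) + f (xs ! i) + sum_list (map f (drop (Suc i) xs))"
    by (simp add: take_Suc_conv_app_nth[OF lt] add.assoc)
  finally show ?thesis .
qed

lemma Am_new:
  assumes "i < length bs"
  shows "Am (T', take i bs @ drop (Suc i) bs @ [T', T'], acc') = Am (T', bs, acc) - (T' - bs ! i)"
  unfolding Am_def using sum_list_remove_nth[OF assms, of "\<lambda>b. T' - b"] by simp

lemma sum_ai: "(\<Sum>i<length bs. T' - bs ! i) = Am (T', bs, acc)"
  unfolding Am_def by (simp add: sum_list_sum_nth atLeast0LessThan)

locale yfs =
  fixes lam t :: real and a b da db :: "real \<Rightarrow> real" and c0 Cb :: real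
  assumes lam: "0 < lam" and t0: "0 \<le> t"
  and da: "\<And>u. (a has_real_derivative da u) (at u)"
  and db: "\<And>u. (b has_real_derivative db u) (at u)"
  and ode_b: "\<And>u. db u = lam * (c0 - b u)"
  and ode_a: "\<And>u. da u - b u = lam * a u"
  and a0: "a 0 = 0"
  and a_nn: "\<And>u. 0 \<le> u \<Longrightarrow> 0 \<le> a u" and b_nn: "\<And>u. 0 \<le> u \<Longrightarrow> 0 \<le> b u" and c0: "0 \<le> c0"
  and bnd: "\<And>u. 0 \<le> u \<Longrightarrow> u \<le> t \<Longrightarrow> a u \<le> Cb \<and> b u \<le> Cb"
begin

definition V where
  "V s = real (length (fst (snd s))) * a (t - fst s) + b (t - fst s) * Am s + c0 * snd (snd s)"
definition X where
  "X s = b 0 * (Am s + real (length (fst (snd s))) * (t - fst s)) + c0 * snd (snd s)"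

lemma a_meas[measurable]: "a \<in> borel_measurable borel"
  by (rule borel_measurable_continuous_onI, rule continuous_at_imp_continuous_on)
     (use da DERIV_isCont in blast)
lemma b_meas[measurable]: "b \<in> borel_measurable borel"
  by (rule borel_measurable_continuous_onI, rule continuous_at_imp_continuous_on)
     (use db DERIV_isCont in blast)

lemma da_chain[derivative_intros]:
  "(g has_real_derivative g') (at x within S) \<Longrightarrow> ((\<lambda>x. a (g x)) has_real_derivative da (g x) * g') (at x within S)"
  by (rule DERIV_chain2[OF da])
lemma db_chain[derivative_intros]:
  "(g has_real_derivative g') (at x within S) \<Longrightarrow> ((\<lambda>x. b (g x)) has_real_derivative db (g x) * g') (at x within S)"
  by (rule DERIV_chain2[OF db])

lemma meas_V:
  fixes M :: "'a measure" and sf :: "'a \<Rightarrow> yule_state"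
  assumes L: "\<And>\<omega>. length (fst (snd (sf \<omega>))) = L"
    and [measurable]: "(\<lambda>\<omega>. fst (sf \<omega>)) \<in> borel_measurable M"
      "(\<lambda>\<omega>. snd (snd (sf \<omega>))) \<in> borel_measurable M"
      "\<And>j. j < L \<Longrightarrow> (\<lambda>\<omega>. fst (snd (sf \<omega>)) ! j) \<in> borel_measurable M"
  shows "(\<lambda>\<omega>. V (sf \<omega>)) \<in> borel_measurable M" "(\<lambda>\<omega>. X (sf \<omega>)) \<in> borel_measurable M"
proof -
  have [measurable]: "(\<lambda>\<omega>. Am (sf \<omega>)) \<in> borel_measurable M"
    by (rule meas_Am[OF L]) simp_all
  have "(\<lambda>\<omega>. V (sf \<omega>)) = (\<lambda>\<omega>. real L * a (t - fst (sf \<omega>)) + b (t - fst (sf \<omega>)) * Am (sf \<omega>) + c0 * snd (snd (sf \<omega>)))"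
    by (simp add: V_def L)
  then show "(\<lambda>\<omega>. V (sf \<omega>)) \<in> borel_measurable M" by simp
  have "(\<lambda>\<omega>. X (sf \<omega>)) = (\<lambda>\<omega>. b 0 * (Am (sf \<omega>) + real L * (t - fst (sf \<omega>))) + c0 * snd (snd (sf \<omega>)))"
    by (simp add: X_def L)
  then show "(\<lambda>\<omega>. X (sf \<omega>)) \<in> borel_measurable M" by simp
qed

lemma V_nonneg: "wfs s \<Longrightarrow> fst s \<le> t \<Longrightarrow> 0 \<le> V s"
  unfolding V_def using a_nn b_nn c0 Am_nonneg[of s] by (auto simp: wfs_def)

lemma X_nonneg: "wfs s \<Longrightarrow> fst s \<le> t \<Longrightarrow> 0 \<le> X s"
  unfolding X_def using b_nn[of 0] c0 Am_nonneg[of s] t0 by (auto simp: wfs_def)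

end



context yfs begin

lemma FS:
  assumes wf: "wfs s" and Tt: "fst s \<le> t"
  shows "(\<integral>\<^sup>+x. ennreal (if t < fst (yule_step lam (g0 x) s) then X s else V (yule_step lam (g0 x) s)) \<partial>yule_base) = ennreal (V s)"
proof -
  obtain T bs acc where s: "s = (T, bs, acc)" by (cases s)
  define k where "k = length bs"
  have k0: "k > 0" using wf s by (simp add: wfs_def k_def)
  define c where "c = lam * real k"
  have cpos: "c > 0" using lam k0 by (simp add: c_def)
  define U where "U = c * (t - T)"
  have U0: "0 \<le> U" using Tt s cpos by (simp add: U_def)
  define new where "new e i = (T + e / c, take i bs @ drop (Suc i) bs @ [T + e/c, T + e/c], acc + (T + e/c - bs ! i))" for e i
  define idx where "idx u = min (k - 1) (nat \<lfloor>u * real k\<rfloor>)" for u :: real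
  define Gr where "Gr e i = (if t < T + e / c then X s else V (new e i))" for e i
  define Af where "Af x = Am s + real k * (x / c)" for x
  define Hc where "Hc x = real (Suc k) * a (t - T - x/c) + b (t - T - x/c) * (Af x - Af x / real k) + c0 * (acc + Af x / real k)" for x
  define F where "F x = - exp (-x) * (real k * a (t - T - x/c) + b (t - T - x/c) * Af x + c0 * acc)" for x
  have ystep: "yule_step lam (g0 x) s = new (max 0 (fst x)) (idx (snd x))" for x
    using step_g0(1)[OF wf lam, of x] by (simp add: s new_def idx_def k_def c_def)
  have integrand: "(if t < fst (yule_step lam (g0 x) s) then X s else V (yule_step lam (g0 x) s)) = Gr (max 0 (fst x)) (idx (snd x))" for x
    unfolding ystep Gr_def by (simp add: new_def)
  have new_step: "new e i = yule_step lam (g0 (e, real i / real k)) s" if "i < k" "0 \<le> e" for e i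
  proof -
    have "idx (real i / real k) = i" using that k0 by (simp add: idx_def)
    then show ?thesis using ystep[of "(e, real i / real k)"] that by simp
  qed
  have wf_new: "wfs (new e i)" if "i < k" "0 \<le> e" for e i
    using new_step[OF that] wfs_step[OF wf lam] by simp
  have meas: "(\<lambda>x. ennreal (if t < fst (yule_step lam (g0 x) s) then X s else V (yule_step lam (g0 x) s))) \<in> borel_measurable yule_base"
  proof -
    have L: "\<And>x::real\<times>real. length (fst (snd ((\<lambda>_. s) x))) = k" by (simp add: s k_def)
    have g1[measurable]: "(\<lambda>x. fst (g0 x)) \<in> borel_measurable yule_base" unfolding g0_def by measurable
    have g2[measurable]: "(\<lambda>x. snd (g0 x)) \<in> borel_measurable yule_base" unfolding g0_def by measurable
    note ms = meas_step[where M=yule_base and sf="\<lambda>_. s" and x="g0" and L=k and lam=lam, OF k0 L]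
    have m1[measurable]: "(\<lambda>x. fst (yule_step lam (g0 x) s)) \<in> borel_measurable yule_base"
      by (rule ms(1)) simp_all
    have m2: "(\<lambda>x. snd (snd (yule_step lam (g0 x) s))) \<in> borel_measurable yule_base"
      by (rule ms(2)) simp_all
    have m3: "\<And>j. j < Suc k \<Longrightarrow> (\<lambda>x. fst (snd (yule_step lam (g0 x) s)) ! j) \<in> borel_measurable yule_base"
      by (rule ms(3)) simp_all
    have m4: "\<And>x. length (fst (snd (yule_step lam (g0 x) s))) = Suc k"
      by (rule ms(4)) simp_all
    have [measurable]: "(\<lambda>x. V (yule_step lam (g0 x) s)) \<in> borel_measurable yule_base"
      by (rule meas_V(1)[OF m4 m1 m2 m3])
    show ?thesis by measurable
  qed
  interpret UM: prob_space "uniform_measure lborel {0..1::real}"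
    by (rule prob_space_uniform_measure) auto
  have "(\<integral>\<^sup>+x. ennreal (if t < fst (yule_step lam (g0 x) s) then X s else V (yule_step lam (g0 x) s)) \<partial>yule_base)
      = (\<integral>\<^sup>+e. \<integral>\<^sup>+u. ennreal (if t < fst (yule_step lam (g0 (e, u)) s) then X s else V (yule_step lam (g0 (e, u)) s))
            \<partial>uniform_measure lborel {0..1} \<partial>density lborel (exponential_density 1))"
    using meas unfolding yule_base_def by (rule UM.nn_integral_fst[symmetric])
  also have "\<dots> = (\<integral>\<^sup>+e. (\<Sum>i<k. ennreal (Gr (max 0 e) i)) / of_nat k \<partial>density lborel (exponential_density 1))"
  proof (rule nn_integral_cong)
    fix e :: real
    have "(\<integral>\<^sup>+u. ennreal (if t < fst (yule_step lam (g0 (e, u)) s) then X s else V (yule_step lam (g0 (e, u)) s))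
            \<partial>uniform_measure lborel {0..1}) = (\<integral>\<^sup>+u. ennreal (Gr (max 0 e) (idx u)) \<partial>uniform_measure lborel {0..1})"
      by (simp add: integrand)
    also have "\<dots> = (\<Sum>i<k. ennreal (Gr (max 0 e) i)) / of_nat k"
      unfolding idx_def by (rule uniform_idx[OF k0])
    finally show "(\<integral>\<^sup>+u. ennreal (if t < fst (yule_step lam (g0 (e, u)) s) then X s else V (yule_step lam (g0 (e, u)) s))
            \<partial>uniform_measure lborel {0..1}) = (\<Sum>i<k. ennreal (Gr (max 0 e) i)) / of_nat k" .
  qed
  also have "\<dots> = (\<integral>\<^sup>+e. ennreal (if e \<le> U then Hc e else X s) \<partial>density lborel (exponential_density 1))"
  proof (rule nn_integral_cong_AE)
    have "AE e in density lborel (exponential_density 1). 0 \<le> e"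
      by (subst AE_density) (auto simp: exponential_density_def intro!: AE_I2)
    then show "AE e in density lborel (exponential_density 1).
        (\<Sum>i<k. ennreal (Gr (max 0 e) i)) / of_nat k = ennreal (if e \<le> U then Hc e else X s)"
    proof eventually_elim
      case (elim e)
      have Gnn: "0 \<le> Gr e i" if "i < k" for i
      proof (cases "t < T + e / c")
        case True then show ?thesis using X_nonneg[OF wf Tt] by (simp add: Gr_def)
      next
        case False
        have "fst (new e i) \<le> t" using False by (simp add: new_def)
        then show ?thesis using False V_nonneg[OF wf_new[OF that elim]] by (simp add: Gr_def)
      qed
      have "(\<Sum>i<k. ennreal (Gr (max 0 e) i)) / of_nat k = ennreal ((\<Sum>i<k. Gr e i) / real k)"
      proof -
        have "(\<Sum>i<k. ennreal (Gr e i)) = ennreal (\<Sum>i<k. Gr e i)"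
          by (rule sum_ennreal) (use Gnn in auto)
        moreover have "0 \<le> (\<Sum>i<k. Gr e i)" using Gnn by (intro sum_nonneg) auto
        ultimately show ?thesis
          using elim k0 by (simp add: ennreal_of_nat_eq_real_of_nat divide_ennreal)
      qed
      also have "(\<Sum>i<k. Gr e i) / real k = (if e \<le> U then Hc e else X s)"
      proof (cases "e \<le> U")
        case True
        then have nlt: "\<not> t < T + e / c" using cpos by (simp add: U_def field_simps)
        have "(\<Sum>i<k. Gr e i) = (\<Sum>i<k. real (Suc k) * a (t - T - e/c) + b (t - T - e/c) * Af e + c0 * acc
                 + (c0 - b (t - T - e/c)) * (T + e/c - bs ! i))"
        proof (rule sum.cong[OF refl])
          fix i assume "i \<in> {..<k}"
          then have ik: "i < length bs" by (simp add: k_def)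
          have am: "Am (new e i) = Af e - (T + e/c - bs ! i)"
            unfolding new_def Af_def
            using Am_shift[of "T + e/c" bs acc T acc] Am_new[OF ik, of "T + e/c" "acc + (T + e / c - bs ! i)" acc]
            by (simp add: s k_def)
          have ln: "length (fst (snd (new e i))) = Suc k" using ik by (simp add: new_def k_def)
          show "Gr e i = real (Suc k) * a (t - T - e/c) + b (t - T - e/c) * Af e + c0 * acc
                 + (c0 - b (t - T - e/c)) * (T + e/c - bs ! i)"
            unfolding Gr_def using nlt by (simp add: V_def ln am, simp add: new_def algebra_simps)
        qed
        also have "\<dots> = real k * (real (Suc k) * a (t - T - e/c) + b (t - T - e/c) * Af e + c0 * acc)
              + (c0 - b (t - T - e/c)) * Af e"
        proof -
          have "(\<Sum>i<k. T + e/c - bs ! i) = Af e"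
            using sum_ai[of "T + e/c" bs acc] Am_shift[of "T + e/c" bs acc T acc]
            by (simp add: Af_def s k_def)
          then show ?thesis by (simp add: sum.distrib sum_distrib_left[symmetric])
        qed
        finally have S: "(\<Sum>i<k. Gr e i) = real k * (real (Suc k) * a (t - T - e/c) + b (t - T - e/c) * Af e + c0 * acc)
              + (c0 - b (t - T - e/c)) * Af e" .
        show ?thesis using True k0 unfolding S by (simp add: Hc_def field_simps)
      next
        case False
        then have "t < T + e / c" using cpos by (simp add: U_def field_simps)
        then show ?thesis using False k0 by (simp add: Gr_def)
      qed
      finally show ?case .
    qed
  qed
  also have "\<dots> = ennreal (V s)"
  proof (rule exp_first_step[where F=F])
    show "0 \<le> U" by (rule U0)
    show "(F has_real_derivative exp (-x) * Hc x) (at x)" if "0 \<le> x" "x \<le> U" for x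
    proof -
      have "(F has_real_derivative
          exp (-x) * (real k * a (t - T - x/c) + b (t - T - x/c) * Af x + c0 * acc)
          - exp (-x) * (real k * (da (t - T - x/c) * (- 1 / c)) + db (t - T - x/c) * (- 1 / c) * Af x
                  + b (t - T - x/c) * (real k / c))) (at x)"
        unfolding F_def Af_def using cpos
        by (auto intro!: derivative_eq_intros simp: field_simps)
      moreover have "exp (-x) * (real k * a (t - T - x/c) + b (t - T - x/c) * Af x + c0 * acc)
          - exp (-x) * (real k * (da (t - T - x/c) * (- 1 / c)) + db (t - T - x/c) * (- 1 / c) * Af x
                  + b (t - T - x/c) * (real k / c)) = exp (-x) * Hc x"
      proof -
        have dA: "da (t - T - x/c) = b (t - T - x/c) + lam * a (t - T - x/c)" using ode_a by (simp add: algebra_simps)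
        show ?thesis unfolding Hc_def dA ode_b using k0 lam
          by (simp add: c_def field_simps)
      qed
      ultimately show ?thesis by simp
    qed
    show "0 \<le> Hc x" if "0 \<le> x" "x \<le> U" for x
    proof -
      have u: "0 \<le> t - T - x/c" using that cpos by (simp add: U_def field_simps)
      have A: "0 \<le> Af x" using Am_nonneg[OF wf] that cpos by (simp add: Af_def)
      have "Af x / real k \<le> Af x" using A k0 by (simp add: divide_le_eq_1 field_simps mult_le_cancel_left1)
      moreover have "0 \<le> acc" using wf s by (simp add: wfs_def)
      ultimately show ?thesis unfolding Hc_def using a_nn[OF u] b_nn[OF u] c0 A k0
        by (intro add_nonneg_nonneg mult_nonneg_nonneg) auto
    qed
    show "Hc \<in> borel_measurable borel" unfolding Hc_def Af_def by measurable
    show "0 \<le> X s" by (rule X_nonneg[OF wf Tt])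
    show "F U = - exp (-U) * X s"
    proof -
      have h: "t - T - U / c = 0" "U / c = t - T" using cpos by (simp_all add: U_def)
      show ?thesis unfolding F_def Af_def h by (simp add: X_def s k_def algebra_simps a0)
    qed
    show "F 0 = - V s" by (simp add: F_def V_def Af_def s k_def)
  qed
  finally show ?thesis .
qed

end



context yfs begin

abbreviation ch where "ch s \<omega> n \<equiv> gchain g0 lam s \<omega> n"

definition trm where
  "trm s \<omega> j = ennreal (if fst (ch s \<omega> j) \<le> t \<and> t < fst (ch s \<omega> (Suc j)) then X (ch s \<omega> j) else 0)"
definition tl where
  "tl s \<omega> n = ennreal (if fst (ch s \<omega> n) \<le> t then V (ch s \<omega> n) else 0)"
definition G where
  "G n s \<omega> = (\<Sum>j<n. trm s \<omega> j) + tl s \<omega> n"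

lemma meas_ch:
  assumes "wfs s"
  shows "(\<lambda>\<omega>. fst (ch s \<omega> n)) \<in> borel_measurable yule_space"
    "(\<lambda>\<omega>. V (ch s \<omega> n)) \<in> borel_measurable yule_space"
    "(\<lambda>\<omega>. X (ch s \<omega> n)) \<in> borel_measurable yule_space"
proof -
  have ne: "fst (snd s) \<noteq> []" using assms by (simp add: wfs_def)
  note mg = meas_gchain[where g=g0 and sf="\<lambda>\<omega>. \<omega>" and M=yule_space and lam=lam and s=s and n=n, OF ne meas_coords(1,2)]
  show "(\<lambda>\<omega>. fst (ch s \<omega> n)) \<in> borel_measurable yule_space" using mg by simp
  have L: "\<And>\<omega>. length (fst (snd (ch s \<omega> n))) = length (fst (snd s)) + n" using mg by simp
  have m1: "(\<lambda>\<omega>. fst (ch s \<omega> n)) \<in> borel_measurable yule_space" using mg by simp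
  have m2: "(\<lambda>\<omega>. snd (snd (ch s \<omega> n))) \<in> borel_measurable yule_space" using mg by simp
  have m3: "\<And>j. j < length (fst (snd s)) + n \<Longrightarrow> (\<lambda>\<omega>. fst (snd (ch s \<omega> n)) ! j) \<in> borel_measurable yule_space"
    using mg by simp
  show "(\<lambda>\<omega>. V (ch s \<omega> n)) \<in> borel_measurable yule_space" by (rule meas_V(1)[OF L m1 m2 m3])
  show "(\<lambda>\<omega>. X (ch s \<omega> n)) \<in> borel_measurable yule_space" by (rule meas_V(2)[OF L m1 m2 m3])
qed

lemma meas_G:
  assumes "wfs s"
  shows "(\<lambda>\<omega>. trm s \<omega> j) \<in> borel_measurable yule_space" "(\<lambda>\<omega>. G n s \<omega>) \<in> borel_measurable yule_space"
proof -
  note [measurable] = meas_ch[OF assms]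
  show "(\<lambda>\<omega>. trm s \<omega> j) \<in> borel_measurable yule_space" unfolding trm_def by measurable
  have [measurable]: "\<And>j. (\<lambda>\<omega>. trm s \<omega> j) \<in> borel_measurable yule_space" unfolding trm_def by measurable
  show "(\<lambda>\<omega>. G n s \<omega>) \<in> borel_measurable yule_space" unfolding G_def tl_def by measurable
qed

lemma G_shift:
  assumes "fst s \<le> t"
  shows "G (Suc n) s (case_nat x \<omega>) = ennreal (if t < fst (yule_step lam (g0 x) s) then X s else 0) + G n (yule_step lam (g0 x) s) \<omega>"
proof -
  have "G (Suc n) s (case_nat x \<omega>) = trm s (case_nat x \<omega>) 0 + (\<Sum>j<n. trm s (case_nat x \<omega>) (Suc j)) + tl s (case_nat x \<omega>) (Suc n)"
    by (simp only: G_def sum.lessThan_Suc_shift)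
  also have "trm s (case_nat x \<omega>) 0 = ennreal (if t < fst (yule_step lam (g0 x) s) then X s else 0)"
    unfolding trm_def using assms by simp
  also have "(\<Sum>j<n. trm s (case_nat x \<omega>) (Suc j)) = (\<Sum>j<n. trm (yule_step lam (g0 x) s) \<omega> j)"
    unfolding trm_def gchain_case_nat by (simp del: gchain.simps)
  also have "tl s (case_nat x \<omega>) (Suc n) = tl (yule_step lam (g0 x) s) \<omega> n"
    unfolding tl_def gchain_case_nat by (simp del: gchain.simps)
  finally show ?thesis by (simp add: G_def add.assoc)
qed

lemma G_zero:
  assumes "wfs s" "t < fst s"
  shows "G n s \<omega> = 0"
proof -
  have mono: "fst s \<le> fst (ch s \<omega> j)" for j
    using T_gchain_mono[OF assms(1) lam, of 0 j \<omega>] by simp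
  have "trm s \<omega> j = 0" for j using mono[of j] assms(2) by (simp add: trm_def)
  moreover have "tl s \<omega> n = 0" using mono[of n] assms(2) by (simp add: tl_def)
  ultimately show ?thesis by (simp add: G_def)
qed

lemma telescope:
  "wfs s \<Longrightarrow> fst s \<le> t \<Longrightarrow> (\<integral>\<^sup>+\<omega>. G n s \<omega> \<partial>yule_space) = ennreal (V s)"
proof (induction n arbitrary: s)
  case 0
  have "(\<integral>\<^sup>+\<omega>. G 0 s \<omega> \<partial>yule_space) = (\<integral>\<^sup>+\<omega>. ennreal (V s) \<partial>yule_space)"
    using 0 by (simp add: G_def tl_def)
  also have "\<dots> = ennreal (V s)"
    using YB.P.emeasure_space_1 by (simp add: yule_space_def)
  finally show ?case .
next
  case (Suc n)
  have "(\<integral>\<^sup>+\<omega>. G (Suc n) s \<omega> \<partial>yule_space) = (\<integral>\<^sup>+x. (\<integral>\<^sup>+\<omega>. G (Suc n) s (case_nat x \<omega>) \<partial>yule_space) \<partial>yule_base)"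
    by (rule nn_integral_yule_space_iter) (rule meas_G(2)[OF Suc.prems(1)])
  also have "\<dots> = (\<integral>\<^sup>+x. ennreal (if t < fst (yule_step lam (g0 x) s) then X s else V (yule_step lam (g0 x) s)) \<partial>yule_base)"
  proof (rule nn_integral_cong)
    fix x
    have wf': "wfs (yule_step lam (g0 x) s)" by (rule wfs_step[OF Suc.prems(1) lam])
    have "(\<integral>\<^sup>+\<omega>. G (Suc n) s (case_nat x \<omega>) \<partial>yule_space) = (\<integral>\<^sup>+\<omega>. ennreal (if t < fst (yule_step lam (g0 x) s) then X s else 0) + G n (yule_step lam (g0 x) s) \<omega> \<partial>yule_space)"
      by (simp add: G_shift[OF Suc.prems(2)])
    also have "\<dots> = (\<integral>\<^sup>+\<omega>. ennreal (if t < fst (yule_step lam (g0 x) s) then X s else 0) \<partial>yule_space) + (\<integral>\<^sup>+\<omega>. G n (yule_step lam (g0 x) s) \<omega> \<partial>yule_space)"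
      by (rule nn_integral_add) (auto intro: meas_G(2)[OF wf'])
    also have "(\<integral>\<^sup>+\<omega>. ennreal (if t < fst (yule_step lam (g0 x) s) then X s else 0) \<partial>yule_space) = ennreal (if t < fst (yule_step lam (g0 x) s) then X s else 0)"
      using YB.P.emeasure_space_1 by (simp add: yule_space_def)
    also have "(\<integral>\<^sup>+\<omega>. G n (yule_step lam (g0 x) s) \<omega> \<partial>yule_space) = (if t < fst (yule_step lam (g0 x) s) then 0 else ennreal (V (yule_step lam (g0 x) s)))"
      using Suc.IH[OF wf'] G_zero[OF wf'] by auto
    finally show "(\<integral>\<^sup>+\<omega>. G (Suc n) s (case_nat x \<omega>) \<partial>yule_space) = ennreal (if t < fst (yule_step lam (g0 x) s) then X s else V (yule_step lam (g0 x) s))"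
      by simp
  qed
  also have "\<dots> = ennreal (V s)" by (rule FS[OF Suc.prems])
  finally show ?case .
qed

end



definition qf :: "nat \<Rightarrow> nat \<Rightarrow> real" where
  "qf k n = (\<Prod>j<n. real (k + j) / real (k + j + 2))"

lemma cancel_aux: "(x::real) \<noteq> 0 \<Longrightarrow> c / (x * y) * (x / z) = c / (y * z)"
  by (cases "y = 0"; cases "z = 0") (simp_all add: field_simps)

lemma qf_closed: "k > 0 \<Longrightarrow> qf k n = real k * real (k + 1) / (real (k + n) * real (k + n + 1))"
proof (induction n)
  case 0 then show ?case by (simp add: qf_def)
next
  case (Suc n)
  have "qf k (Suc n) = qf k n * (real (k + n) / real (k + n + 2))" by (simp add: qf_def)
  also have "\<dots> = real k * real (k + 1) / (real (k + n) * real (k + n + 1)) * (real (k + n) / real (k + n + 2))"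
    using Suc by simp
  also have "\<dots> = real k * real (k + 1) / (real (k + n + 1) * real (k + n + 2))"
    by (rule cancel_aux) (use Suc.prems in simp)
  also have "\<dots> = real k * real (k + 1) / (real (k + Suc n) * real (k + Suc n + 1))"
    by simp
  finally show ?case .
qed

lemma qf_Suc: "qf k (Suc n) = real k / real (k + 2) * qf (Suc k) n"
  unfolding qf_def by (subst prod.lessThan_Suc_shift) (simp add: add.commute add.left_commute)

lemma exp_int_k:
  assumes k: "k > 0"
  shows "(\<integral>\<^sup>+e. ennreal (exp (- 2 * max 0 e / real k)) \<partial>density lborel (exponential_density 1)) = ennreal (real k / real (k + 2))"
proof -
  define r where "r = 1 + 2 / real k"
  have r: "r > 0" unfolding r_def using k by (intro add_pos_nonneg) auto
  have "(\<integral>\<^sup>+e. ennreal (exp (- 2 * max 0 e / real k)) \<partial>density lborel (exponential_density 1))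
      = (\<integral>\<^sup>+e. ennreal (exponential_density 1 e) * ennreal (exp (- 2 * max 0 e / real k)) \<partial>lborel)"
    by (subst nn_integral_density) auto
  also have "\<dots> = (\<integral>\<^sup>+e. ennreal (exp (- (r * e))) * indicator {0..} e \<partial>lborel)"
    by (rule nn_integral_cong) (auto simp: exponential_density_def indicator_def r_def ennreal_mult'[symmetric]
        exp_add[symmetric] algebra_simps)
  also have "\<dots> = ennreal (0 - (- exp (- (r * 0)) / r))"
  proof (rule nn_integral_FTC_atLeast)
    show "((\<lambda>x. - exp (- (r * x)) / r) \<longlongrightarrow> 0) at_top"
      using r by real_asymp
    show "((\<lambda>x. - exp (- (r * x)) / r) has_real_derivative exp (- (r * x))) (at x)" for x
      using r by (auto intro!: derivative_eq_intros simp: field_simps)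
  qed auto
  also have "0 - (- exp (- (r * 0)) / r) = real k / real (k + 2)"
    using k by (simp add: r_def field_simps)
  finally show ?thesis .
qed

context yfs begin

lemma laplace:
  "wfs s \<Longrightarrow> (\<integral>\<^sup>+\<omega>. ennreal (exp (- 2 * lam * fst (ch s \<omega> n))) \<partial>yule_space)
      = ennreal (exp (- 2 * lam * fst s) * qf (length (fst (snd s))) n)"
proof (induction n arbitrary: s)
  case 0
  then show ?case using YB.P.emeasure_space_1 by (simp add: yule_space_def qf_def)
next
  case (Suc n)
  define k where "k = length (fst (snd s))"
  have k0: "k > 0" using Suc.prems by (simp add: wfs_def k_def)
  have m: "(\<lambda>\<omega>. ennreal (exp (- 2 * lam * fst (ch s \<omega> (Suc n))))) \<in> borel_measurable yule_space"
    using meas_ch(1)[OF Suc.prems, of "Suc n"] by measurable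
  have "(\<integral>\<^sup>+\<omega>. ennreal (exp (- 2 * lam * fst (ch s \<omega> (Suc n)))) \<partial>yule_space)
      = (\<integral>\<^sup>+x. (\<integral>\<^sup>+\<omega>. ennreal (exp (- 2 * lam * fst (ch s (case_nat x \<omega>) (Suc n)))) \<partial>yule_space) \<partial>yule_base)"
    by (rule nn_integral_yule_space_iter[OF m])
  also have "\<dots> = (\<integral>\<^sup>+x. ennreal (exp (- 2 * lam * fst s) * qf (Suc k) n) * ennreal (exp (- 2 * max 0 (fst x) / real k)) \<partial>yule_base)"
  proof (rule nn_integral_cong)
    fix x
    have wf': "wfs (yule_step lam (g0 x) s)" by (rule wfs_step[OF Suc.prems lam])
    have len: "length (fst (snd (yule_step lam (g0 x) s))) = Suc k"
      using length_yule_step[of s lam "g0 x"] Suc.prems by (simp add: wfs_def k_def)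
    have T: "fst (yule_step lam (g0 x) s) = fst s + max 0 (fst x) / (lam * real k)"
      using step_g0(1)[OF Suc.prems lam, of x] by (simp add: k_def)
    have "exp (- 2 * lam * fst (yule_step lam (g0 x) s)) = exp (- 2 * lam * fst s) * exp (- 2 * max 0 (fst x) / real k)"
      unfolding T using lam by (simp add: exp_add[symmetric] field_simps)
    then show "(\<integral>\<^sup>+\<omega>. ennreal (exp (- 2 * lam * fst (ch s (case_nat x \<omega>) (Suc n)))) \<partial>yule_space)
        = ennreal (exp (- 2 * lam * fst s) * qf (Suc k) n) * ennreal (exp (- 2 * max 0 (fst x) / real k))"
      unfolding gchain_case_nat Suc.IH[OF wf'] len
      by (simp add: ennreal_mult'[symmetric] mult_ac)
  qed
  also have "\<dots> = ennreal (exp (- 2 * lam * fst s) * qf (Suc k) n) * (\<integral>\<^sup>+x. ennreal (exp (- 2 * max 0 (fst x) / real k)) \<partial>yule_base)"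
    by (rule nn_integral_cmult) (simp add: yule_base_def)
  also have "(\<integral>\<^sup>+x. ennreal (exp (- 2 * max 0 (fst x) / real k)) \<partial>yule_base) = ennreal (real k / real (k + 2))"
  proof -
    interpret UM: prob_space "uniform_measure lborel {0..1::real}"
      by (rule prob_space_uniform_measure) auto
    have mm: "(\<lambda>x. ennreal (exp (- 2 * max 0 (fst x) / real k))) \<in> borel_measurable
        (density lborel (exponential_density 1) \<Otimes>\<^sub>M uniform_measure lborel {0..1::real})"
      by measurable
    have e1: "emeasure (uniform_measure lborel {0..1::real}) UNIV = 1"
      using UM.emeasure_space_1 by simp
    have "(\<integral>\<^sup>+x. ennreal (exp (- 2 * max 0 (fst x) / real k)) \<partial>yule_base)
        = (\<integral>\<^sup>+e. ennreal (exp (- 2 * max 0 e / real k)) \<partial>density lborel (exponential_density 1))"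
      unfolding yule_base_def using UM.nn_integral_fst[OF mm] e1 by simp
    also have "\<dots> = ennreal (real k / real (k + 2))" by (rule exp_int_k[OF k0])
    finally show ?thesis .
  qed
  also have "ennreal (exp (- 2 * lam * fst s) * qf (Suc k) n) * ennreal (real k / real (k + 2))
      = ennreal (exp (- 2 * lam * fst s) * qf k (Suc n))"
  proof -
    have "exp (- 2 * lam * fst s) * qf k (Suc n) = (exp (- 2 * lam * fst s) * qf (Suc k) n) * (real k / real (k + 2))"
      unfolding qf_Suc by (simp add: mult_ac)
    then show ?thesis by (simp only:) (rule ennreal_mult''[symmetric], simp)
  qed
  finally show ?case by (simp add: k_def)
qed

end



context yfs begin

definition Ct where "Ct = Cb + Cb * t + c0 * t"

lemma Cb_nn: "0 \<le> Cb" using bnd[of 0] a0 t0 by simp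

lemma V_bound:
  assumes "wfs s" "fst s \<le> t"
  shows "V s \<le> real (length (fst (snd s))) * Ct"
proof -
  define k where "k = real (length (fst (snd s)))"
  define u where "u = t - fst s"
  have T0: "0 \<le> fst s" using assms by (simp add: wfs_def)
  have u: "0 \<le> u" "u \<le> t" using assms T0 by (auto simp: u_def)
  have k0: "0 \<le> k" by (simp add: k_def)
  have kt: "k * fst s \<le> k * t" using assms(2) k0 by (rule mult_left_mono)
  have A: "0 \<le> Am s" "Am s \<le> k * t"
    using Am_nonneg[OF assms(1)] Am_le[OF assms(1)] kt by (auto simp: k_def)
  have acc0: "0 \<le> snd (snd s)" "snd (snd s) \<le> k * fst s"
    using assms(1) by (auto simp: wfs_def k_def)
  have acc: "0 \<le> snd (snd s)" "snd (snd s) \<le> k * t" using acc0 kt by linarith+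
  have "V s = k * a u + b u * Am s + c0 * snd (snd s)" by (simp add: V_def k_def u_def)
  also have "\<dots> \<le> k * Cb + Cb * (k * t) + c0 * (k * t)"
  proof (intro add_mono)
    show "k * a u \<le> k * Cb" using bnd[OF u] k0 by (simp add: mult_left_mono)
    show "b u * Am s \<le> Cb * (k * t)" using bnd[OF u] b_nn[OF u(1)] A by (intro mult_mono) auto
    show "c0 * snd (snd s) \<le> c0 * (k * t)" using c0 acc by (simp add: mult_left_mono)
  qed
  also have "\<dots> = real (length (fst (snd s))) * Ct" by (simp add: Ct_def k_def algebra_simps)
  finally show ?thesis .
qed

lemma tl_int_bound:
  assumes wf: "wfs s"
  shows "(\<integral>\<^sup>+\<omega>. tl s \<omega> n \<partial>yule_space) \<le>
     ennreal (Ct * real (length (fst (snd s)) + n) * exp (2 * lam * t)) * ennreal (exp (- 2 * lam * fst s) * qf (length (fst (snd s))) n)"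
proof -
  define C1 where "C1 = Ct * real (length (fst (snd s)) + n) * exp (2 * lam * t)"
  have C1: "0 \<le> C1" unfolding C1_def Ct_def using Cb_nn t0 c0 by simp
  have "(\<integral>\<^sup>+\<omega>. tl s \<omega> n \<partial>yule_space) \<le> (\<integral>\<^sup>+\<omega>. ennreal C1 * ennreal (exp (- 2 * lam * fst (ch s \<omega> n))) \<partial>yule_space)"
  proof (rule nn_integral_mono)
    fix \<omega>
    show "tl s \<omega> n \<le> ennreal C1 * ennreal (exp (- 2 * lam * fst (ch s \<omega> n)))"
    proof (cases "fst (ch s \<omega> n) \<le> t")
      case True
      have wfn: "wfs (ch s \<omega> n)" by (rule wfs_gchain[OF wf lam])
      have len: "length (fst (snd (ch s \<omega> n))) = length (fst (snd s)) + n" by (rule len_gchain[OF wf lam])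
      have "V (ch s \<omega> n) \<le> real (length (fst (snd s)) + n) * Ct"
        using V_bound[OF wfn True] len by simp
      also have "\<dots> \<le> real (length (fst (snd s)) + n) * Ct * (exp (2 * lam * t) * exp (- 2 * lam * fst (ch s \<omega> n)))"
      proof -
        have "1 \<le> exp (2 * lam * t) * exp (- 2 * lam * fst (ch s \<omega> n))"
          using True lam by (simp add: exp_add[symmetric])
        moreover have "0 \<le> real (length (fst (snd s)) + n) * Ct" using Cb_nn t0 c0 by (simp add: Ct_def)
        ultimately show ?thesis by (simp add: mult_le_cancel_left1)
      qed
      also have "\<dots> = C1 * exp (- 2 * lam * fst (ch s \<omega> n))" by (simp add: C1_def mult_ac)
      finally show ?thesis using True C1 by (simp add: tl_def ennreal_mult'[symmetric])
    next
      case False then show ?thesis by (simp add: tl_def)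
    qed
  qed
  also have "\<dots> = ennreal C1 * (\<integral>\<^sup>+\<omega>. ennreal (exp (- 2 * lam * fst (ch s \<omega> n))) \<partial>yule_space)"
    by (rule nn_integral_cmult) (use meas_ch(1)[OF wf, of n] in measurable)
  also have "\<dots> = ennreal C1 * ennreal (exp (- 2 * lam * fst s) * qf (length (fst (snd s))) n)"
    by (simp only: laplace[OF wf])
  finally show ?thesis by (simp add: C1_def)
qed

definition s0 :: yule_state where "s0 = (0, [0, 0], 0)"

lemma tl_s0_lim: "(\<lambda>n. \<integral>\<^sup>+\<omega>. tl s0 \<omega> n \<partial>yule_space) \<longlonglongrightarrow> 0"
proof (rule tendsto_sandwich[where f="\<lambda>_. 0" and h="\<lambda>n. ennreal (6 * Ct * exp (2 * lam * t) / (real n + 3))"])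
  show "\<forall>\<^sub>F n in sequentially. (0::ennreal) \<le> (\<integral>\<^sup>+\<omega>. tl s0 \<omega> n \<partial>yule_space)" by simp
  show "\<forall>\<^sub>F n in sequentially. (\<integral>\<^sup>+\<omega>. tl s0 \<omega> n \<partial>yule_space) \<le> ennreal (6 * Ct * exp (2 * lam * t) / (real n + 3))"
  proof (intro always_eventually allI)
    fix n
    have "(\<integral>\<^sup>+\<omega>. tl s0 \<omega> n \<partial>yule_space) \<le> ennreal (Ct * real (2 + n) * exp (2 * lam * t)) * ennreal (qf 2 n)"
      using tl_int_bound[OF wfs_init[folded s0_def], of n] by (simp add: s0_def numeral_2_eq_2)
    also have "\<dots> = ennreal (Ct * real (2 + n) * exp (2 * lam * t) * qf 2 n)"
      using Cb_nn t0 c0 by (simp add: ennreal_mult'[symmetric] Ct_def)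
    also have "Ct * real (2 + n) * exp (2 * lam * t) * qf 2 n = 6 * Ct * exp (2 * lam * t) / (real n + 3)"
    proof -
      have q: "qf 2 n = 6 / ((2 + real n) * (3 + real n))" by (simp add: qf_closed)
      have nz: "2 + real n \<noteq> 0" "3 + real n \<noteq> 0" "real n + 3 \<noteq> 0" by linarith+
      have h: "qf 2 n * (2 + real n) = 6 / (3 + real n)"
        using cancel_aux[of "2 + real n" 6 "3 + real n" 1] nz(1) unfolding q by simp
      have "Ct * real (2 + n) * exp (2 * lam * t) * qf 2 n = Ct * exp (2 * lam * t) * (qf 2 n * (2 + real n))"
        by (simp add: mult_ac)
      also have "\<dots> = 6 * Ct * exp (2 * lam * t) / (real n + 3)" unfolding h by (simp add: add.commute)
      finally show ?thesis .
    qed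
    finally show "(\<integral>\<^sup>+\<omega>. tl s0 \<omega> n \<partial>yule_space) \<le> ennreal (6 * Ct * exp (2 * lam * t) / (real n + 3))" .
  qed
  have "(\<lambda>n. 6 * Ct * exp (2 * lam * t) / (real n + 3)) \<longlonglongrightarrow> 0" by real_asymp
  then show "(\<lambda>n. ennreal (6 * Ct * exp (2 * lam * t) / (real n + 3))) \<longlonglongrightarrow> 0"
    using tendsto_ennrealI by fastforce
qed simp

lemma main_limit:
  "(\<integral>\<^sup>+\<omega>. (\<Sum>j. trm s0 \<omega> j) \<partial>yule_space) = ennreal (V s0)"
proof -
  have wf0: "wfs s0" "fst s0 \<le> t" using wfs_init t0 by (simp_all add: s0_def)
  define I where "I j = (\<integral>\<^sup>+\<omega>. trm s0 \<omega> j \<partial>yule_space)" for j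
  have mtrm: "\<And>j. (\<lambda>\<omega>. trm s0 \<omega> j) \<in> borel_measurable yule_space" by (rule meas_G(1)[OF wf0(1)])
  have mtl: "(\<lambda>\<omega>. tl s0 \<omega> n) \<in> borel_measurable yule_space" for n
    unfolding tl_def using meas_ch[OF wf0(1), of n] by measurable
  have eq: "(\<Sum>j<n. I j) + (\<integral>\<^sup>+\<omega>. tl s0 \<omega> n \<partial>yule_space) = ennreal (V s0)" for n
  proof -
    have "ennreal (V s0) = (\<integral>\<^sup>+\<omega>. G n s0 \<omega> \<partial>yule_space)" using telescope[OF wf0] by simp
    also have "\<dots> = (\<integral>\<^sup>+\<omega>. (\<Sum>j<n. trm s0 \<omega> j) \<partial>yule_space) + (\<integral>\<^sup>+\<omega>. tl s0 \<omega> n \<partial>yule_space)"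
      unfolding G_def by (rule nn_integral_add) (use mtrm mtl in auto)
    also have "(\<integral>\<^sup>+\<omega>. (\<Sum>j<n. trm s0 \<omega> j) \<partial>yule_space) = (\<Sum>j<n. I j)"
      unfolding I_def by (rule nn_integral_sum) (use mtrm in auto)
    finally show ?thesis by simp
  qed
  have "(\<lambda>n. (\<Sum>j<n. I j) + (\<integral>\<^sup>+\<omega>. tl s0 \<omega> n \<partial>yule_space)) \<longlonglongrightarrow> suminf I + 0"
    by (intro tendsto_add summable_LIMSEQ summableI tl_s0_lim)
  then have "suminf I = ennreal (V s0)" unfolding eq by (simp add: LIMSEQ_const_iff)
  moreover have "(\<integral>\<^sup>+\<omega>. (\<Sum>j. trm s0 \<omega> j) \<partial>yule_space) = suminf I"
    unfolding I_def by (rule nn_integral_suminf) (rule mtrm)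
  ultimately show ?thesis by simp
qed

end



definition good :: "(nat \<Rightarrow> real \<times> real) \<Rightarrow> bool" where
  "good \<omega> \<longleftrightarrow> (\<forall>n. 0 \<le> fst (\<omega> n))"

lemma AE_good: "AE \<omega> in yule_space. good \<omega>"
proof -
  have "AE x in yule_base. 0 \<le> fst x"
  proof -
    interpret UM: prob_space "uniform_measure lborel {0..1::real}"
      by (rule prob_space_uniform_measure) auto
    interpret PS: pair_sigma_finite "density lborel (exponential_density 1)" "uniform_measure lborel {0..1::real}"
      by (intro pair_sigma_finite.intro prob_space_imp_sigma_finite prob_space_exponential_density UM.prob_space_axioms) simp
    have "AE x in density lborel (exponential_density 1). 0 \<le> x"
      by (subst AE_density) (auto simp: exponential_density_def intro!: AE_I2)
    then have "AE x in density lborel (exponential_density 1). AE y in uniform_measure lborel {0..1::real}. 0 \<le> fst (x, y)"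
      by eventually_elim simp
    then show ?thesis unfolding yule_base_def by (intro PS.AE_pair_measure) measurable
  qed
  then have "\<And>n. AE \<omega> in yule_space. 0 \<le> fst (\<omega> n)"
    unfolding yule_space_def by (intro AE_PiM_component) (auto intro: prob_space_yule_base)
  then show ?thesis unfolding good_def by (subst AE_all_countable) auto
qed

lemma chain_good: "good \<omega> \<Longrightarrow> gchain g0 lam s \<omega> n = gchain id lam s \<omega> n"
proof (induction n)
  case (Suc n)
  have "g0 (\<omega> n) = \<omega> n" using Suc.prems by (simp add: good_def g0_def)
  then show ?case using Suc by simp
qed simp

lemma meas_yc:
  "(\<lambda>\<omega>. fst (yule_chain lam \<omega> n)) \<in> borel_measurable yule_space"
  "(\<lambda>\<omega>. snd (snd (yule_chain lam \<omega> n))) \<in> borel_measurable yule_space"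
  "j < 2 + n \<Longrightarrow> (\<lambda>\<omega>. fst (snd (yule_chain lam \<omega> n)) ! j) \<in> borel_measurable yule_space"
  "length (fst (snd (yule_chain lam \<omega> n))) = 2 + n"
proof -
  note mg = meas_gchain[where g=id and sf="\<lambda>\<omega>. \<omega>" and M=yule_space and lam=lam and s="(0, [0, 0], 0)" and n=n,
      OF _ meas_coords(3,4), simplified, folded yule_chain_gchain]
  show "(\<lambda>\<omega>. fst (yule_chain lam \<omega> n)) \<in> borel_measurable yule_space" using mg by simp
  show "(\<lambda>\<omega>. snd (snd (yule_chain lam \<omega> n))) \<in> borel_measurable yule_space" using mg by simp
  show "j < 2 + n \<Longrightarrow> (\<lambda>\<omega>. fst (snd (yule_chain lam \<omega> n)) ! j) \<in> borel_measurable yule_space" using mg by simp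
  show "length (fst (snd (yule_chain lam \<omega> n))) = 2 + n" using mg by simp
qed

lemma meas_sums:
  "(\<lambda>\<omega>. pendant_sum lam \<omega> t) \<in> borel_measurable yule_space"
  "(\<lambda>\<omega>. interior_sum lam \<omega> t) \<in> borel_measurable yule_space"
proof -
  note [measurable] = meas_yc(1,2)
  define Lf where "Lf \<omega> = (LEAST n. t < fst (yule_chain lam \<omega> (Suc n)))" for \<omega>
  have mL: "Lf \<in> measurable yule_space (count_space UNIV)" unfolding Lf_def by measurable
  have mD[measurable]: "(\<lambda>\<omega>. yule_defined lam \<omega> t) \<in> measurable yule_space (count_space UNIV)"
    unfolding yule_defined_def by measurable
  define F where "F n \<omega> = (\<Sum>i<2 + n. t - fst (snd (yule_chain lam \<omega> n)) ! i)" for n \<omega>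
  have "(\<lambda>\<omega>. F (Lf \<omega>) \<omega>) \<in> borel_measurable yule_space"
  proof (rule measurable_compose_countable'[OF _ mL])
    fix n :: nat
    show "(\<lambda>\<omega>. F n \<omega>) \<in> borel_measurable yule_space"
      unfolding F_def by (intro borel_measurable_sum borel_measurable_diff borel_measurable_const meas_yc(3); simp)
  qed simp
  moreover have "pendant_sum lam \<omega> t = (if yule_defined lam \<omega> t then F (Lf \<omega>) \<omega> else 0)" for \<omega>
    unfolding pendant_sum_def yule_at_def F_def Lf_def
    by (simp add: sum_list_sum_nth meas_yc(4) atLeast0LessThan)
  ultimately show "(\<lambda>\<omega>. pendant_sum lam \<omega> t) \<in> borel_measurable yule_space" by simp
  have "(\<lambda>\<omega>. snd (snd (yule_chain lam \<omega> (Lf \<omega>)))) \<in> borel_measurable yule_space"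
    by (rule measurable_compose_countable'[OF _ mL]) (auto intro!: meas_yc(2))
  moreover have "interior_sum lam \<omega> t = (if yule_defined lam \<omega> t then snd (snd (yule_chain lam \<omega> (Lf \<omega>))) else 0)" for \<omega>
    unfolding interior_sum_def yule_at_def Lf_def by simp
  ultimately show "(\<lambda>\<omega>. interior_sum lam \<omega> t) \<in> borel_measurable yule_space" by simp
qed

context yfs begin

lemma sum_trm_good:
  assumes g: "good \<omega>"
  shows "(\<Sum>j. trm s0 \<omega> j) = ennreal (if yule_defined lam \<omega> t then X (yule_at lam \<omega> t) else 0)"
    and "yule_defined lam \<omega> t \<Longrightarrow> wfs (yule_at lam \<omega> t) \<and> fst (yule_at lam \<omega> t) \<le> t"
proof -
  have wf0: "wfs s0" by (simp add: s0_def wfs_init)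
  have yc: "yule_chain lam \<omega> n = ch s0 \<omega> n" for n
    by (simp add: yule_chain_gchain chain_good[OF g] s0_def)
  define Tn where "Tn n = fst (yule_chain lam \<omega> n)" for n
  have mono: "m \<le> n \<Longrightarrow> Tn m \<le> Tn n" for m n
    unfolding Tn_def yc using T_gchain_mono[OF wf0 lam] by blast
  have T0: "Tn 0 = 0" by (simp add: Tn_def)
  have trm_eq: "trm s0 \<omega> j = ennreal (if Tn j \<le> t \<and> t < Tn (Suc j) then X (yule_chain lam \<omega> j) else 0)" for j
    by (simp only: trm_def Tn_def yc)
  show "(\<Sum>j. trm s0 \<omega> j) = ennreal (if yule_defined lam \<omega> t then X (yule_at lam \<omega> t) else 0)"
  proof (cases "yule_defined lam \<omega> t")
    case True
    define m where "m = (LEAST n. t < Tn (Suc n))"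
    have ex: "\<exists>n. t < Tn (Suc n)" using True by (simp add: yule_defined_def Tn_def)
    have m1: "t < Tn (Suc m)" unfolding m_def by (rule LeastI_ex[OF ex])
    have m2: "Tn m \<le> t"
    proof (cases m)
      case 0 then show ?thesis using T0 t0 by simp
    next
      case (Suc m')
      have "\<not> t < Tn (Suc m')" using not_less_Least[of m' "\<lambda>n. t < Tn (Suc n)"] Suc by (simp add: m_def)
      then show ?thesis using Suc by simp
    qed
    have cond: "(Tn j \<le> t \<and> t < Tn (Suc j)) \<longleftrightarrow> j = m" for j
    proof
      assume h: "Tn j \<le> t \<and> t < Tn (Suc j)"
      then have "m \<le> j" unfolding m_def by (intro Least_le) simp
      moreover have "\<not> m < j"
      proof
        assume "m < j"
        then have "Tn (Suc m) \<le> Tn j" by (intro mono) simp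
        then show False using h m1 by simp
      qed
      ultimately show "j = m" by simp
    qed (use m1 m2 in simp)
    have "trm s0 \<omega> = (\<lambda>j. if j = m then ennreal (X (yule_chain lam \<omega> m)) else 0)"
      by (rule ext) (simp add: trm_eq cond)
    then have "(\<Sum>j. trm s0 \<omega> j) = ennreal (X (yule_chain lam \<omega> m))"
      using sums_single[of m "\<lambda>j. ennreal (X (yule_chain lam \<omega> m))"] by (simp add: sums_iff)
    moreover have "yule_at lam \<omega> t = yule_chain lam \<omega> m" by (simp add: yule_at_def m_def Tn_def)
    ultimately show ?thesis using True by simp
  next
    case False
    then have "\<And>n. \<not> t < Tn (Suc n)" by (simp add: yule_defined_def Tn_def)
    then have "trm s0 \<omega> = (\<lambda>j. 0)" by (intro ext) (simp add: trm_eq)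
    then show ?thesis using False by simp
  qed
  assume D: "yule_defined lam \<omega> t"
  define m where "m = (LEAST n. t < Tn (Suc n))"
  have ex: "\<exists>n. t < Tn (Suc n)" using D by (simp add: yule_defined_def Tn_def)
  have m2: "Tn m \<le> t"
  proof (cases m)
    case 0 then show ?thesis using T0 t0 by simp
  next
    case (Suc m')
    have "\<not> t < Tn (Suc m')" using not_less_Least[of m' "\<lambda>n. t < Tn (Suc n)"] Suc by (simp add: m_def)
    then show ?thesis using Suc by simp
  qed
  have ya: "yule_at lam \<omega> t = ch s0 \<omega> m" by (simp add: yule_at_def m_def Tn_def yc)
  show "wfs (yule_at lam \<omega> t) \<and> fst (yule_at lam \<omega> t) \<le> t"
    using wfs_gchain[OF wf0 lam] m2 by (simp add: ya Tn_def yc)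
qed

end



context yfs begin

lemma final_generic:
  assumes f: "\<And>\<omega>. good \<omega> \<Longrightarrow> f \<omega> = (if yule_defined lam \<omega> t then X (yule_at lam \<omega> t) else 0)"
    and mf: "f \<in> borel_measurable yule_space"
  shows "(\<integral>\<omega>. f \<omega> \<partial>yule_space) = V s0"
proof -
  have nn: "AE \<omega> in yule_space. 0 \<le> f \<omega>"
    using AE_good
  proof eventually_elim
    case (elim \<omega>)
    show ?case
    proof (cases "yule_defined lam \<omega> t")
      case True
      then show ?thesis using f[OF elim] sum_trm_good(2)[OF elim True] X_nonneg by auto
    qed (simp add: f[OF elim])
  qed
  have "(\<integral>\<^sup>+\<omega>. ennreal (f \<omega>) \<partial>yule_space) = (\<integral>\<^sup>+\<omega>. (\<Sum>j. trm s0 \<omega> j) \<partial>yule_space)"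
    by (rule nn_integral_cong_AE) (use AE_good in \<open>eventually_elim, simp add: sum_trm_good(1) f\<close>)
  also have "\<dots> = ennreal (V s0)" by (rule main_limit)
  finally have "(\<integral>\<^sup>+\<omega>. ennreal (f \<omega>) \<partial>yule_space) = ennreal (V s0)" .
  moreover have "0 \<le> V s0" by (rule V_nonneg) (use t0 wfs_init in \<open>simp_all add: s0_def\<close>)
  ultimately show ?thesis using integral_eq_nn_integral[OF mf nn] by simp
qed

end

lemma ratio_alg:
  fixes x l :: real
  assumes x: "1 < x" and l: "0 < l"
  shows "((x - 1/x) / l / (2 * x)) / ((x + 1/x - 2) / l / (2 * x - 2)) = 1 + 1/x"
proof -
  have x0: "x \<noteq> 0" "x - 1 \<noteq> 0" using x by auto
  have x2: "2 * x - 2 \<noteq> 0" using x by simp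
  have A: "(x - 1/x) / l / (2 * x) = (x - 1) * (x + 1) / (2 * x * x * l)"
    using x0 l by (simp add: field_simps)
  have B: "(x + 1/x - 2) / l / (2 * x - 2) = (x - 1) / (2 * x * l)"
  proof -
    have "(x + 1/x - 2) = (x - 1) * (2 * x - 2) / (2 * x)" using x0 by (simp add: field_simps)
    then show ?thesis using x0 x2 l by (simp add: field_simps)
  qed
  have "(x - 1) * (x + 1) / (2 * x * x * l) / ((x - 1) / (2 * x * l)) = (x + 1) / x"
    using x0 l by (simp add: field_simps)
  then show ?thesis unfolding A B using x0 by (simp add: field_simps)
qed

theorem theorem4:
  fixes lam :: real
  assumes "lam > 0"
  shows "(\<forall>t\<ge>0. yule_I lam t = (exp (lam * t) + exp (- lam * t) - 2) / lam
                 \<and> yule_P lam t = (exp (lam * t) - exp (- lam * t)) / lam)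
         \<and> (\<exists>C c. C > 0 \<and> c > 0 \<and>
              (\<forall>t>0. \<bar>yule_p lam t / yule_i lam t - 1\<bar> \<le> C * exp (- c * t)))"
proof -
  have lam: "0 < lam" by (rule assms)
  have formulas: "yule_I lam t = (exp (lam * t) + exp (- lam * t) - 2) / lam
                 \<and> yule_P lam t = (exp (lam * t) - exp (- lam * t)) / lam" if t: "0 \<le> t" for t
  proof
    define Cb where "Cb = exp (lam * t) / lam + 1"
    have Cb1: "1 \<le> Cb" using lam by (simp add: Cb_def)
    have eu: "exp (lam * u) \<le> exp (lam * t)" if "u \<le> t" for u using that lam by simp
    have emu: "exp (- (lam * u)) \<le> 1" if "0 \<le> u" for u using that lam by simp
    interpret I: yfs lam t "\<lambda>u. (exp (lam * u) + exp (- (lam * u)) - 2) / (2 * lam)" "\<lambda>u. 1 - exp (- (lam * u))"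
      "\<lambda>u. (exp (lam * u) - exp (- (lam * u))) / 2" "\<lambda>u. lam * exp (- (lam * u))" 1 Cb
    proof
      show "0 < lam" "0 \<le> t" "(0::real) \<le> 1" using lam t by simp_all
      show "((\<lambda>u. (exp (lam * u) + exp (- (lam * u)) - 2) / (2 * lam)) has_real_derivative (exp (lam * u) - exp (- (lam * u))) / 2) (at u)" for u
        using lam by (auto intro!: derivative_eq_intros simp: field_simps)
      show "((\<lambda>u. 1 - exp (- (lam * u))) has_real_derivative lam * exp (- (lam * u))) (at u)" for u
        by (auto intro!: derivative_eq_intros)
      show "lam * exp (- (lam * u)) = lam * (1 - (1 - exp (- (lam * u))))" for u by simp
      show "(exp (lam * u) - exp (- (lam * u))) / 2 - (1 - exp (- (lam * u))) = lam * ((exp (lam * u) + exp (- (lam * u)) - 2) / (2 * lam))" for u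
        using lam by (simp add: field_simps)
      show "(exp (lam * 0) + exp (- (lam * 0)) - 2) / (2 * lam) = 0" by simp
      show "0 \<le> (exp (lam * u) + exp (- (lam * u)) - 2) / (2 * lam)" if "0 \<le> u" for u
      proof -
        have "1 + lam * u \<le> exp (lam * u)" "1 + - (lam * u) \<le> exp (- (lam * u))" by (rule exp_ge_add_one_self)+
        then have "0 \<le> exp (lam * u) + exp (- (lam * u)) - 2" by linarith
        then show ?thesis using lam by simp
      qed
      show "0 \<le> 1 - exp (- (lam * u))" if "0 \<le> u" for u using emu[OF that] by simp
      show "(exp (lam * u) + exp (- (lam * u)) - 2) / (2 * lam) \<le> Cb \<and> 1 - exp (- (lam * u)) \<le> Cb" if "0 \<le> u" "u \<le> t" for u
      proof
        have "exp (lam * u) + exp (- (lam * u)) - 2 \<le> 2 * exp (lam * t)"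
          using eu[OF that(2)] emu[OF that(1)] lam t by (smt (verit) one_le_exp_iff mult_nonneg_nonneg)
        then have "(exp (lam * u) + exp (- (lam * u)) - 2) / (2 * lam) \<le> (2 * exp (lam * t)) / (2 * lam)"
          using lam by (intro divide_right_mono) auto
        then have "(exp (lam * u) + exp (- (lam * u)) - 2) / (2 * lam) \<le> exp (lam * t) / lam"
          by simp
        then show "(exp (lam * u) + exp (- (lam * u)) - 2) / (2 * lam) \<le> Cb" by (simp add: Cb_def)
        show "1 - exp (- (lam * u)) \<le> Cb" using Cb1 by (smt (verit) exp_gt_zero)
      qed
    qed
    have "yule_I lam t = I.V I.s0"
      unfolding yule_I_def
    proof (rule I.final_generic)
      show "(\<lambda>\<omega>. interior_sum lam \<omega> t) \<in> borel_measurable yule_space" by (rule meas_sums(2))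
      show "interior_sum lam \<omega> t = (if yule_defined lam \<omega> t then I.X (yule_at lam \<omega> t) else 0)" for \<omega>
        by (simp add: interior_sum_def I.X_def)
    qed
    also have "I.V I.s0 = (exp (lam * t) + exp (- lam * t) - 2) / lam"
      unfolding I.V_def I.s0_def using lam by (simp add: Am_def field_simps)
    finally show "yule_I lam t = (exp (lam * t) + exp (- lam * t) - 2) / lam" .
    interpret P: yfs lam t "\<lambda>u. (exp (lam * u) - exp (- (lam * u))) / (2 * lam)" "\<lambda>u. exp (- (lam * u))"
      "\<lambda>u. (exp (lam * u) + exp (- (lam * u))) / 2" "\<lambda>u. - lam * exp (- (lam * u))" 0 Cb
    proof
      show "0 < lam" "0 \<le> t" "(0::real) \<le> 0" using lam t by simp_all
      show "((\<lambda>u. (exp (lam * u) - exp (- (lam * u))) / (2 * lam)) has_real_derivative (exp (lam * u) + exp (- (lam * u))) / 2) (at u)" for u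
        using lam by (auto intro!: derivative_eq_intros simp: field_simps)
      show "((\<lambda>u. exp (- (lam * u))) has_real_derivative - lam * exp (- (lam * u))) (at u)" for u
        by (auto intro!: derivative_eq_intros)
      show "- lam * exp (- (lam * u)) = lam * (0 - exp (- (lam * u)))" for u by simp
      show "(exp (lam * u) + exp (- (lam * u))) / 2 - exp (- (lam * u)) = lam * ((exp (lam * u) - exp (- (lam * u))) / (2 * lam))" for u
        using lam by (simp add: field_simps)
      show "(exp (lam * 0) - exp (- (lam * 0))) / (2 * lam) = 0" by simp
      show "0 \<le> (exp (lam * u) - exp (- (lam * u))) / (2 * lam)" if "0 \<le> u" for u
        using lam that by (simp add: mult_nonneg_nonneg)
      show "0 \<le> exp (- (lam * u))" for u by simp
      show "(exp (lam * u) - exp (- (lam * u))) / (2 * lam) \<le> Cb \<and> exp (- (lam * u)) \<le> Cb" if "0 \<le> u" "u \<le> t" for u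
      proof
        have "exp (lam * u) - exp (- (lam * u)) \<le> 2 * exp (lam * t)"
          using eu[OF that(2)] lam by (smt (verit) exp_gt_zero)
        then have "(exp (lam * u) - exp (- (lam * u))) / (2 * lam) \<le> (2 * exp (lam * t)) / (2 * lam)"
          using lam by (intro divide_right_mono) auto
        then have "(exp (lam * u) - exp (- (lam * u))) / (2 * lam) \<le> exp (lam * t) / lam"
          by simp
        then show "(exp (lam * u) - exp (- (lam * u))) / (2 * lam) \<le> Cb" by (simp add: Cb_def)
        show "exp (- (lam * u)) \<le> Cb" using Cb1 emu[OF that(1)] by linarith
      qed
    qed
    have "yule_P lam t = P.V P.s0"
      unfolding yule_P_def
    proof (rule P.final_generic)
      show "(\<lambda>\<omega>. pendant_sum lam \<omega> t) \<in> borel_measurable yule_space" by (rule meas_sums(1))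
      show "pendant_sum lam \<omega> t = (if yule_defined lam \<omega> t then P.X (yule_at lam \<omega> t) else 0)" for \<omega>
      proof -
        obtain T bs acc where ya: "yule_at lam \<omega> t = (T, bs, acc)" by (cases "yule_at lam \<omega> t")
        have "sum_list (map (\<lambda>b. t - b) bs) = Am (T, bs, acc) + real (length bs) * (t - T)"
          using Am_shift[of t bs acc T acc] by (simp add: Am_def)
        then show ?thesis by (simp add: pendant_sum_def P.X_def ya)
      qed
    qed
    also have "P.V P.s0 = (exp (lam * t) - exp (- lam * t)) / lam"
      unfolding P.V_def P.s0_def using lam by (simp add: Am_def field_simps)
    finally show "yule_P lam t = (exp (lam * t) - exp (- lam * t)) / lam" .
  qed
  have ratio: "\<bar>yule_p lam t / yule_i lam t - 1\<bar> \<le> 1 * exp (- lam * t)" if t: "0 < t" for t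
  proof -
    define x where "x = exp (lam * t)"
    have x1: "1 < x" using lam t by (simp add: x_def)
    have em: "exp (- lam * t) = 1 / x" by (simp add: x_def exp_minus field_simps)
    have "yule_p lam t / yule_i lam t = ((x - 1/x) / lam / (2 * x)) / ((x + 1/x - 2) / lam / (2 * x - 2))"
      using formulas[of t] t unfolding yule_p_def yule_i_def em by (simp add: x_def)
    also have "\<dots> = 1 + 1/x" by (rule ratio_alg[OF x1 lam])
    finally show ?thesis using x1 em by simp
  qed
  show ?thesis
  proof (intro conjI)
    show "\<forall>t\<ge>0. yule_I lam t = (exp (lam * t) + exp (- lam * t) - 2) / lam
                 \<and> yule_P lam t = (exp (lam * t) - exp (- lam * t)) / lam" using formulas by blast
    show "\<exists>C c. C > 0 \<and> c > 0 \<and> (\<forall>t>0. \<bar>yule_p lam t / yule_i lam t - 1\<bar> \<le> C * exp (- c * t))"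
      using ratio lam by (intro exI[of _ 1] exI[of _ lam]) auto
  qed
qed


end
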